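(* Let $G$ be the dihedral group of order $2n$ with $n=2m$ even, and let $C$ be its cyclic subgroup of order $n$. Let $S\subseteq G\setminus\{e\}$ with $S=S^{-1}$ be such that $\Gamma=\mathrm{Cay}(G,S)$ is distance-regular with intersection array $\{k,k-1,k-\mu;1,\mu,k\}$ where $\mu<k-1$, and let $H$ be the part of this bipartite graph containing the identity element. If $H\neq C$, then, with $k_1=|S\cap C|$, $k_2=k-k_1$, the Cayley graph $\Gamma_C=\mathrm{Cay}(C,S\cap C)$ is the incidence graph of a symmetric partial geometric design with parameters $(m,k_1,\alpha,\beta)$ and has exactly the distinct eigenvalues $k_1,-k_1,\sqrt{k-\mu},-\sqrt{k-\mu},0$, where $\alpha=\frac{\mu(2k_1-k_2)}{2}$ and $2k_1-1+\beta-\alpha=(k_1-k_2)^2=k-\mu$.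
   Context: For a finite group $G$ with identity $e$ and a subset $S\subseteq G\setminus\{e\}$ with $S=S^{-1}$, the Cayley graph $\mathrm{Cay}(G,S)$ has vertex set $G$, two vertices $a,b$ being adjacent iff $ab^{-1}\in S$. A connected graph of diameter $d$ is distance-regular with intersection array $\{b_0,\dots,b_{d-1};c_1,\dots,c_d\}$ if for all vertices $x,y$ at distance $i$, the number of neighbours of $x$ at distance $i+1$ (resp. $i-1$) from $y$ is $b_i$ (resp. $c_i$). Eigenvalues of a graph are those of its adjacency matrix. A symmetric partial geometric design with parameters $(v,k,\alpha,\beta)$ is an incidence structure with $v$ points and $v$ blocks, each block containing $k$ points and each point in $k$ blocks, such that for each point-block pair $(p,B)$ the number of incident point-block pairs $(p',B')$ with $p'\neq p$, $B'\neq B$, $p'\in B$ and $p\in B'$ equals $\beta$ if $p\in B$ and $\alpha$ if $p\notin B$. Its incidence graph is the bipartite graph on points and blocks with incidence as adjacency. *)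

theory Defs
  imports Complex_Main "HOL-Algebra.Group"
begin

text \<open>Element (a, x) stands for r^a t^x, with r a rotation of order n and t a reflection
  (t r t = r^-1). Hence (a,x)(b,y) = (a + (-1)^x b mod n, x xor y).\<close>

definition dihedral_mult :: "nat \<Rightarrow> nat \<times> bool \<Rightarrow> nat \<times> bool \<Rightarrow> nat \<times> bool" where
  "dihedral_mult n g h =
     ((if snd g then fst g + n - fst h else fst g + fst h) mod n, snd g \<noteq> snd h)"

definition dihedral_group :: "nat \<Rightarrow> (nat \<times> bool) monoid" where
  "dihedral_group n = \<lparr> carrier = {0..<n} \<times> UNIV, mult = dihedral_mult n, one = (0, False) \<rparr>"

definition dihedral_rotations :: "nat \<Rightarrow> (nat \<times> bool) set" where
  "dihedral_rotations n = {0..<n} \<times> {False}"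

definition cayley_adj :: "('a, 'b) monoid_scheme \<Rightarrow> 'a set \<Rightarrow> 'a \<Rightarrow> 'a \<Rightarrow> bool" where
  "cayley_adj G S a b \<longleftrightarrow> a \<otimes>\<^bsub>G\<^esub> inv\<^bsub>G\<^esub> b \<in> S"

definition walk_of_length :: "'a set \<Rightarrow> ('a \<Rightarrow> 'a \<Rightarrow> bool) \<Rightarrow> nat \<Rightarrow> 'a \<Rightarrow> 'a \<Rightarrow> bool" where
  "walk_of_length V adj l x y \<longleftrightarrow>
     (\<exists>xs. length xs = l + 1 \<and> set xs \<subseteq> V \<and> hd xs = x \<and> last xs = y \<and>
           (\<forall>i < l. adj (xs ! i) (xs ! (i + 1))))"

definition graph_connected :: "'a set \<Rightarrow> ('a \<Rightarrow> 'a \<Rightarrow> bool) \<Rightarrow> bool" where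
  "graph_connected V adj \<longleftrightarrow> (\<forall>x\<in>V. \<forall>y\<in>V. \<exists>l. walk_of_length V adj l x y)"

definition graph_dist :: "'a set \<Rightarrow> ('a \<Rightarrow> 'a \<Rightarrow> bool) \<Rightarrow> 'a \<Rightarrow> 'a \<Rightarrow> nat" where
  "graph_dist V adj x y = (LEAST l. walk_of_length V adj l x y)"

definition graph_diameter_is :: "'a set \<Rightarrow> ('a \<Rightarrow> 'a \<Rightarrow> bool) \<Rightarrow> nat \<Rightarrow> bool" where
  "graph_diameter_is V adj d \<longleftrightarrow>
     (\<forall>x\<in>V. \<forall>y\<in>V. graph_dist V adj x y \<le> d) \<and> (\<exists>x\<in>V. \<exists>y\<in>V. graph_dist V adj x y = d)"

text \<open>Distance-regular with intersection array {b_0,...,b_(d-1); c_1,...,c_d}: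
  bs = [b_0,...,b_(d-1)], cs = [c_1,...,c_d] (so c_i = cs ! (i-1)).\<close>
definition distance_regular :: "'a set \<Rightarrow> ('a \<Rightarrow> 'a \<Rightarrow> bool) \<Rightarrow> nat list \<Rightarrow> nat list \<Rightarrow> bool" where
  "distance_regular V adj bs cs \<longleftrightarrow>
     finite V \<and> graph_connected V adj \<and> length cs = length bs \<and>
     graph_diameter_is V adj (length bs) \<and>
     (\<forall>x\<in>V. \<forall>y\<in>V.
        (graph_dist V adj x y < length bs \<longrightarrow>
           card {z\<in>V. adj x z \<and> graph_dist V adj z y = graph_dist V adj x y + 1}
             = bs ! graph_dist V adj x y) \<and>
        (1 \<le> graph_dist V adj x y \<longrightarrow>
           card {z\<in>V. adj x z \<and> graph_dist V adj z y = graph_dist V adj x y - 1}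
             = cs ! (graph_dist V adj x y - 1)))"

definition graph_eigenvalue :: "'a set \<Rightarrow> ('a \<Rightarrow> 'a \<Rightarrow> bool) \<Rightarrow> real \<Rightarrow> bool" where
  "graph_eigenvalue V adj lam \<longleftrightarrow>
     (\<exists>f :: 'a \<Rightarrow> real. (\<exists>x\<in>V. f x \<noteq> 0) \<and>
        (\<forall>x\<in>V. (\<Sum>y\<in>{y\<in>V. adj x y}. f y) = lam * f x))"

text \<open>The graph (V, adj) is the incidence graph of a symmetric partial geometric design
  with parameters (v,k,alpha,beta): V splits into a point class P and a block class Bl,
  incidence being adjacency.\<close>
definition spgd_incidence_graph ::
  "'a set \<Rightarrow> ('a \<Rightarrow> 'a \<Rightarrow> bool) \<Rightarrow> nat \<Rightarrow> nat \<Rightarrow> nat \<Rightarrow> nat \<Rightarrow> bool" where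
  "spgd_incidence_graph V adj v k \<alpha> \<beta> \<longleftrightarrow>
     (\<exists>P Bl. P \<inter> Bl = {} \<and> P \<union> Bl = V \<and> card P = v \<and> card Bl = v \<and> finite V \<and>
        (\<forall>x\<in>V. \<forall>y\<in>V. adj x y \<longleftrightarrow> (x \<in> P \<and> y \<in> Bl \<and> adj x y) \<or> (x \<in> Bl \<and> y \<in> P \<and> adj y x)) \<and>
        (\<forall>B\<in>Bl. card {p\<in>P. adj p B} = k) \<and>
        (\<forall>p\<in>P. card {B\<in>Bl. adj p B} = k) \<and>
        (\<forall>p\<in>P. \<forall>B\<in>Bl.
           card {(p', B'). p' \<in> P \<and> B' \<in> Bl \<and> adj p' B' \<and> p' \<noteq> p \<and> B' \<noteq> B \<and>
                           adj p' B \<and> adj p B'}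
             = (if adj p B then \<beta> else \<alpha>)))"

end

theory Submission
  imports Defs
begin


lemma walk_0_iff: "walk_of_length V adj 0 x y \<longleftrightarrow> x = y \<and> x \<in> V"
proof
  assume "walk_of_length V adj 0 x y"
  then obtain xs where "length xs = 1" "set xs \<subseteq> V" "hd xs = x" "last xs = y"
    unfolding walk_of_length_def by auto
  then show "x = y \<and> x \<in> V"
    by (cases xs) auto
next
  assume "x = y \<and> x \<in> V"
  then show "walk_of_length V adj 0 x y"
    unfolding walk_of_length_def by (intro exI[of _ "[x]"]) auto
qed

lemma walk_Suc_iff: "walk_of_length V adj (Suc l) x y \<longleftrightarrow>
   x \<in> V \<and> (\<exists>z. adj x z \<and> walk_of_length V adj l z y)"
proof
  assume "walk_of_length V adj (Suc l) x y"
  then obtain xs where xs: "length xs = Suc l + 1" "set xs \<subseteq> V" "hd xs = x" "last xs = y"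
     "\<forall>i < Suc l. adj (xs ! i) (xs ! (i + 1))"
    unfolding walk_of_length_def by blast
  then obtain ys where ys: "xs = x # ys" by (cases xs) auto
  have "ys \<noteq> []" using xs ys by auto
  have "adj x (hd ys)" using xs(5)[rule_format, of 0] ys \<open>ys \<noteq> []\<close>
    by (cases ys) auto
  moreover have "walk_of_length V adj l (hd ys) y"
    unfolding walk_of_length_def
  proof (intro exI[of _ ys] conjI allI impI)
    show "length ys = l + 1" using xs ys by auto
    show "set ys \<subseteq> V" using xs ys by auto
    show "hd ys = hd ys" by simp
    show "last ys = y" using xs ys \<open>ys \<noteq> []\<close> by auto
    fix i assume "i < l"
    then show "adj (ys ! i) (ys ! (i + 1))" using xs(5)[rule_format, of "Suc i"] ys by auto
  qed
  ultimately show "x \<in> V \<and> (\<exists>z. adj x z \<and> walk_of_length V adj l z y)"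
    using xs ys by auto
next
  assume "x \<in> V \<and> (\<exists>z. adj x z \<and> walk_of_length V adj l z y)"
  then obtain z ys where x: "x \<in> V" and z: "adj x z" and ys: "length ys = l + 1" "set ys \<subseteq> V" "hd ys = z" "last ys = y"
     "\<forall>i < l. adj (ys ! i) (ys ! (i + 1))"
    unfolding walk_of_length_def by blast
  have ne: "ys \<noteq> []" using ys by auto
  show "walk_of_length V adj (Suc l) x y"
    unfolding walk_of_length_def
  proof (intro exI[of _ "x # ys"] conjI allI impI)
    fix i assume "i < Suc l"
    then show "adj ((x # ys) ! i) ((x # ys) ! (i + 1))"
      using z ys ne by (cases i) (auto simp: hd_conv_nth)
  qed (use x ys ne in auto)
qed

lemma walk_in_V: "walk_of_length V adj l x y \<Longrightarrow> x \<in> V \<and> y \<in> V"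
proof (induction l arbitrary: x)
  case 0 then show ?case by (auto simp: walk_0_iff)
next
  case (Suc l) then show ?case by (auto simp: walk_Suc_iff)
qed

lemma walk_parity:
  assumes flip: "\<And>a b. a \<in> V \<Longrightarrow> b \<in> V \<Longrightarrow> adj a b \<Longrightarrow> \<phi> a \<noteq> \<phi> b"
  shows "walk_of_length V adj l x y \<Longrightarrow> \<phi> y = (\<phi> x \<noteq> odd l)"
proof (induction l arbitrary: x)
  case 0 then show ?case by (auto simp: walk_0_iff)
next
  case (Suc l)
  then obtain z where "x \<in> V" "adj x z" "walk_of_length V adj l z y" by (auto simp: walk_Suc_iff)
  moreover from this have "z \<in> V" using walk_in_V by metis
  ultimately show ?case using Suc.IH flip by fastforce
qed

lemma walk_map:
  assumes "\<And>a. a \<in> V \<Longrightarrow> f a \<in> V" and "\<And>a b. a \<in> V \<Longrightarrow> b \<in> V \<Longrightarrow> adj a b \<Longrightarrow> adj (f a) (f b)"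
  shows "walk_of_length V adj l x y \<Longrightarrow> walk_of_length V adj l (f x) (f y)"
proof (induction l arbitrary: x)
  case 0 then show ?case using assms by (auto simp: walk_0_iff)
next
  case (Suc l)
  then obtain z where "x \<in> V" "adj x z" "walk_of_length V adj l z y" by (auto simp: walk_Suc_iff)
  moreover from this have "z \<in> V" using walk_in_V by metis
  ultimately show ?case using Suc.IH assms unfolding walk_Suc_iff by blast
qed

lemma card_union_fill:
  assumes "finite N" "A \<subseteq> N" "B \<subseteq> N" "A \<inter> B = {}" "card A + card B = card N"
  shows "A \<union> B = N"
proof -
  have "card (A \<union> B) = card N" using assms
    by (metis card_Un_disjoint finite_subset)
  then show ?thesis using assms
    by (metis card_subset_eq le_sup_iff)
qed



context
  fixes V :: "'a set" and adj :: "'a \<Rightarrow> 'a \<Rightarrow> bool" and k \<mu> :: nat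
  assumes drg: "distance_regular V adj [k, k - 1, k - \<mu>] [1, \<mu>, k]"
    and mu_lt: "\<mu> < k - 1"
    and sym: "\<And>x y. x \<in> V \<Longrightarrow> y \<in> V \<Longrightarrow> adj x y \<Longrightarrow> adj y x"
    and irr: "\<And>x. x \<in> V \<Longrightarrow> \<not> adj x x"
begin

lemma finV: "finite V" using drg unfolding distance_regular_def by auto

lemma walk_dist: "x \<in> V \<Longrightarrow> y \<in> V \<Longrightarrow> walk_of_length V adj (graph_dist V adj x y) x y"
proof -
  assume "x \<in> V" "y \<in> V"
  then have "\<exists>l. walk_of_length V adj l x y"
    using drg unfolding distance_regular_def graph_connected_def by blast
  then show ?thesis unfolding graph_dist_def by (rule LeastI_ex)
qed

lemma dist_le: "walk_of_length V adj l x y \<Longrightarrow> graph_dist V adj x y \<le> l"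
  unfolding graph_dist_def by (rule Least_le)

lemma dist_0: "x \<in> V \<Longrightarrow> y \<in> V \<Longrightarrow> graph_dist V adj x y = 0 \<longleftrightarrow> x = y"
proof
  assume "x \<in> V" "y \<in> V" "graph_dist V adj x y = 0"
  then show "x = y" using walk_dist[of x y] by (simp add: walk_0_iff)
next
  assume "x \<in> V" "y \<in> V" "x = y"
  then have "walk_of_length V adj 0 x y" by (simp add: walk_0_iff)
  then show "graph_dist V adj x y = 0" using dist_le by fastforce
qed

lemma dist_1: "x \<in> V \<Longrightarrow> y \<in> V \<Longrightarrow> graph_dist V adj x y = 1 \<longleftrightarrow> adj x y"
proof
  assume xy: "x \<in> V" "y \<in> V" "graph_dist V adj x y = 1"
  then have "walk_of_length V adj (Suc 0) x y" using walk_dist[of x y] by simp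
  then show "adj x y" by (auto simp: walk_Suc_iff walk_0_iff)
next
  assume xy: "x \<in> V" "y \<in> V" "adj x y"
  then have "walk_of_length V adj (Suc 0) x y" by (auto simp: walk_Suc_iff walk_0_iff)
  then have "graph_dist V adj x y \<le> 1" using dist_le by fastforce
  moreover have "x \<noteq> y" using xy irr by auto
  ultimately show "graph_dist V adj x y = 1" using dist_0 xy by fastforce
qed

lemma dist_le3: "x \<in> V \<Longrightarrow> y \<in> V \<Longrightarrow> graph_dist V adj x y \<le> 3"
  using drg unfolding distance_regular_def graph_diameter_is_def by (auto simp: numeral_3_eq_3)

lemma drg_b: "x \<in> V \<Longrightarrow> y \<in> V \<Longrightarrow> graph_dist V adj x y < 3 \<Longrightarrow>
   card {z\<in>V. adj x z \<and> graph_dist V adj z y = graph_dist V adj x y + 1} = [k, k - 1, k - \<mu>] ! graph_dist V adj x y"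
  using drg unfolding distance_regular_def by auto

lemma drg_c: "x \<in> V \<Longrightarrow> y \<in> V \<Longrightarrow> 1 \<le> graph_dist V adj x y \<Longrightarrow>
   card {z\<in>V. adj x z \<and> graph_dist V adj z y = graph_dist V adj x y - 1} = [1, \<mu>, k] ! (graph_dist V adj x y - 1)"
  using drg unfolding distance_regular_def by auto

lemma degree: "x \<in> V \<Longrightarrow> card {z\<in>V. adj x z} = k"
proof -
  assume x: "x \<in> V"
  have "graph_dist V adj x x = 0" using dist_0 x by auto
  then have "card {z\<in>V. adj x z \<and> graph_dist V adj z x = 1} = k" using drg_b[OF x x] by simp
  moreover have "{z\<in>V. adj x z \<and> graph_dist V adj z x = 1} = {z\<in>V. adj x z}"
    using dist_1 x sym by auto
  ultimately show ?thesis by simp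
qed

lemma nbhd_split:
  assumes x: "x \<in> V" and y: "y \<in> V"
  shows "{z\<in>V. adj x z} = {z\<in>V. adj x z \<and> graph_dist V adj z y = graph_dist V adj x y + 1}
           \<union> {z\<in>V. adj x z \<and> graph_dist V adj z y + 1 = graph_dist V adj x y}"
proof -
  let ?d = "graph_dist V adj x y"
  let ?N = "{z\<in>V. adj x z}"
  let ?A = "{z\<in>V. adj x z \<and> graph_dist V adj z y = ?d + 1}"
  let ?B = "{z\<in>V. adj x z \<and> graph_dist V adj z y + 1 = ?d}"
  have fN: "finite ?N" using finV by auto
  have cN: "card ?N = k" using degree x by auto
  have k2: "2 \<le> k" using mu_lt by auto
  have "?d \<le> 3" using dist_le3 x y by auto
  then consider "?d = 0" | "?d = 1" | "?d = 2" | "?d = 3" by linarith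
  then show ?thesis
  proof cases
    case 1
    then have "x = y" using dist_0[OF x y] by auto
    then show ?thesis using dist_1 x sym 1 by auto
  next
    case 2
    have "card ?A = k - 1" using drg_b[OF x y] 2 by simp
    moreover have "?B = {z\<in>V. adj x z \<and> graph_dist V adj z y = ?d - 1}" using 2 by auto
    then have "card ?B = 1" using drg_c[OF x y] 2 by simp
    ultimately have "?A \<union> ?B = ?N"
      by (intro card_union_fill) (use fN cN k2 in auto)
    then show ?thesis by simp
  next
    case 3
    have "card ?A = k - \<mu>" using drg_b[OF x y] 3 by simp
    moreover have "?B = {z\<in>V. adj x z \<and> graph_dist V adj z y = ?d - 1}" using 3 by auto
    then have "card ?B = \<mu>" using drg_c[OF x y] 3 by simp
    ultimately have "?A \<union> ?B = ?N"
      by (intro card_union_fill) (use fN cN mu_lt in auto)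
    then show ?thesis by simp
  next
    case 4
    have "?B = {z\<in>V. adj x z \<and> graph_dist V adj z y = ?d - 1}" using 4 by auto
    then have "card ?B = k" using drg_c[OF x y] 4 by simp
    then have "?B = ?N" using fN cN by (intro card_subset_eq) auto
    then show ?thesis by auto
  qed
qed

lemma flip:
  "x \<in> V \<Longrightarrow> y \<in> V \<Longrightarrow> z \<in> V \<Longrightarrow> adj x z \<Longrightarrow>
   graph_dist V adj z y = graph_dist V adj x y + 1 \<or> graph_dist V adj z y + 1 = graph_dist V adj x y"
  using nbhd_split by blast

lemma parity_flip:
  "e \<in> V \<Longrightarrow> x \<in> V \<Longrightarrow> z \<in> V \<Longrightarrow> adj x z \<Longrightarrow>
   odd (graph_dist V adj x e) \<noteq> odd (graph_dist V adj z e)"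
  using flip[of x e z] by presburger

lemma dist_parity:
  assumes e: "e \<in> V" and x: "x \<in> V" and y: "y \<in> V"
  shows "odd (graph_dist V adj y e) = (odd (graph_dist V adj x e) \<noteq> odd (graph_dist V adj x y))"
  using walk_parity[of V adj "\<lambda>v. odd (graph_dist V adj v e)", OF _ walk_dist[OF x y]] parity_flip[OF e]
  by blast

lemma common_nb:
  assumes e: "e \<in> V" and x: "x \<in> V" and y: "y \<in> V"
  shows "card {z\<in>V. adj x z \<and> adj z y} =
    (if x = y then k else if odd (graph_dist V adj x e) = odd (graph_dist V adj y e) then \<mu> else 0)"
proof -
  let ?d = "graph_dist V adj x y"
  have eq: "{z\<in>V. adj x z \<and> adj z y} = {z\<in>V. adj x z \<and> graph_dist V adj z y = 1}"
    using dist_1 y by auto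
  have par: "odd (graph_dist V adj x e) = odd (graph_dist V adj y e) \<longleftrightarrow> even ?d"
    using dist_parity[OF e x y] by auto
  have "?d \<le> 3" using dist_le3 x y by auto
  then consider "?d = 0" | "?d = 1" | "?d = 2" | "?d = 3" by linarith
  then show ?thesis
  proof cases
    case 1
    then have "x = y" using dist_0[OF x y] by auto
    moreover have "{z\<in>V. adj x z \<and> adj z y} = {z\<in>V. adj x z}" using sym \<open>x = y\<close> x by auto
    ultimately show ?thesis using degree x by auto
  next
    case 2
    then have "x \<noteq> y" using dist_0[OF x y] by auto
    have "{z\<in>V. adj x z \<and> graph_dist V adj z y = 1} = {}"
    proof (rule ccontr)
      assume "{z\<in>V. adj x z \<and> graph_dist V adj z y = 1} \<noteq> {}"
      then obtain z where "z \<in> V" "adj x z" "graph_dist V adj z y = 1" by auto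
      then have "z \<in> {z\<in>V. adj x z}" by auto
      then show False using nbhd_split[OF x y] 2 \<open>graph_dist V adj z y = 1\<close> by auto
    qed
    then have c0: "card {z\<in>V. adj x z \<and> adj z y} = 0" using eq by (metis card.empty)
    show ?thesis using c0 par 2 \<open>x \<noteq> y\<close> by simp
  next
    case 3
    then have "x \<noteq> y" using dist_0[OF x y] by auto
    have "{z\<in>V. adj x z \<and> graph_dist V adj z y = 1} = {z\<in>V. adj x z \<and> graph_dist V adj z y = ?d - 1}"
      using 3 by auto
    then have "card {z\<in>V. adj x z \<and> graph_dist V adj z y = 1} = \<mu>" using drg_c[OF x y] 3 by simp
    then show ?thesis using eq par 3 \<open>x \<noteq> y\<close> by simp
  next
    case 4
    then have "x \<noteq> y" using dist_0[OF x y] by auto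
    have "{z\<in>V. adj x z \<and> graph_dist V adj z y = 1} = {}"
    proof (rule ccontr)
      assume "{z\<in>V. adj x z \<and> graph_dist V adj z y = 1} \<noteq> {}"
      then obtain z where "z \<in> V" "adj x z" "graph_dist V adj z y = 1" by auto
      then have "z \<in> {z\<in>V. adj x z}" by auto
      then show False using nbhd_split[OF x y] 4 \<open>graph_dist V adj z y = 1\<close> by auto
    qed
    then have c0: "card {z\<in>V. adj x z \<and> adj z y} = 0" using eq by (metis card.empty)
    show ?thesis using c0 par 4 \<open>x \<noteq> y\<close> by simp
  qed
qed

end


locale dih =
  fixes n :: nat
  assumes npos: "0 < n"
begin

definition el :: "int \<Rightarrow> bool \<Rightarrow> nat \<times> bool" where
  "el x p = (nat (x mod int n), p)"

lemma carrier_D: "carrier (dihedral_group n) = {0..<n} \<times> UNIV"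
  by (simp add: dihedral_group_def)

lemma one_D: "\<one>\<^bsub>dihedral_group n\<^esub> = el 0 False"
  by (simp add: dihedral_group_def el_def)

lemma el_carrier: "el x p \<in> carrier (dihedral_group n)"
  using npos by (simp add: carrier_D el_def nat_less_iff)

lemma carrier_el: "g \<in> carrier (dihedral_group n) \<Longrightarrow> g = el (int (fst g)) (snd g)"
  by (cases g) (simp add: carrier_D el_def)

lemma el_eq: "el x p = el y q \<longleftrightarrow> x mod int n = y mod int n \<and> p = q"
  using npos by (auto simp: el_def eq_nat_nat_iff)

lemma mult_el: "el x p \<otimes>\<^bsub>dihedral_group n\<^esub> el y q = el (if p then x - y else x + y) (p \<noteq> q)"
proof -
  have ymod: "nat (y mod int n) \<le> n" using npos
    by (metis nat_le_iff less_le pos_mod_bound of_nat_0_less_iff)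
  have "int ((nat (x mod int n) + n - nat (y mod int n)) mod n) = (x - y) mod int n"
  proof -
    have "int (nat (x mod int n) + n - nat (y mod int n)) = x mod int n + int n - y mod int n"
      using ymod npos by (simp add: of_nat_diff)
    then have "int ((nat (x mod int n) + n - nat (y mod int n)) mod n) = (x mod int n + int n - y mod int n) mod int n"
      by (simp add: zmod_int)
    also have "\<dots> = (x - y) mod int n"
      by (metis (no_types, opaque_lifting) mod_add_self2 mod_diff_left_eq mod_diff_right_eq)
    finally show ?thesis .
  qed
  moreover have "int ((nat (x mod int n) + nat (y mod int n)) mod n) = (x + y) mod int n"
    using npos by (simp add: zmod_int mod_simps)
  ultimately show ?thesis
    by (simp add: dihedral_group_def dihedral_mult_def el_def) (metis nat_int)
qed

lemma inv_el: "inv\<^bsub>dihedral_group n\<^esub> (el x p) = el (if p then x else - x) p"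
proof -
  let ?G = "dihedral_group n"
  let ?y = "el (if p then x else - x) p"
  show ?thesis
    unfolding m_inv_def
  proof (rule the_equality)
    show "?y \<in> carrier ?G \<and> el x p \<otimes>\<^bsub>?G\<^esub> ?y = \<one>\<^bsub>?G\<^esub> \<and> ?y \<otimes>\<^bsub>?G\<^esub> el x p = \<one>\<^bsub>?G\<^esub>"
      by (simp add: el_carrier mult_el one_D el_eq)
  next
    fix z assume z: "z \<in> carrier ?G \<and> el x p \<otimes>\<^bsub>?G\<^esub> z = \<one>\<^bsub>?G\<^esub> \<and> z \<otimes>\<^bsub>?G\<^esub> el x p = \<one>\<^bsub>?G\<^esub>"
    then have zz: "z = el (int (fst z)) (snd z)" using carrier_el by blast
    have "el x p \<otimes>\<^bsub>?G\<^esub> el (int (fst z)) (snd z) = el 0 False" using z zz one_D by metis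
    then have "(if p then x - int (fst z) else x + int (fst z)) mod int n = 0 mod int n \<and> p = snd z"
      by (cases p; cases "snd z") (simp_all add: mult_el el_eq)
    then have "int (fst z) mod int n = (if p then x else - x) mod int n \<and> snd z = p"
    proof (cases p)
      case True
      then have "(x - int (fst z)) mod int n = 0" "snd z = p" using \<open>_ \<and> p = snd z\<close> by auto
      then have "int (fst z) mod int n = x mod int n" by algebra
      then show ?thesis using True \<open>snd z = p\<close> by simp
    next
      case False
      then have "(x + int (fst z)) mod int n = 0" "snd z = p" using \<open>_ \<and> p = snd z\<close> by auto
      then have "int (fst z) mod int n = (- x) mod int n" by algebra
      then show ?thesis using False \<open>snd z = p\<close> by simp
    qed
    then show "z = ?y" using zz el_eq by metis
  qed
qed

lemma fst_el: "int (fst (el x p)) = x mod int n"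
  using npos by (simp add: el_def)

lemma snd_el[simp]: "snd (el x p) = p"
  by (simp add: el_def)

lemma el_mod[simp]: "el (x mod int n) p = el x p"
  by (simp add: el_eq)

end

lemma card_bij_witness:
  assumes "\<And>a. a \<in> A \<Longrightarrow> f a \<in> B \<and> g (f a) = a" "\<And>b. b \<in> B \<Longrightarrow> g b \<in> A \<and> f (g b) = b"
  shows "card A = card B"
  by (rule bij_betw_same_card[of f], rule bij_betw_byWitness[of _ g]) (use assms in auto)



locale cay = dih +
  fixes m k \<mu> :: nat and S :: "(nat \<times> bool) set"
  assumes nm: "n = 2 * m"
  assumes S_sub: "S \<subseteq> carrier (dihedral_group n) - {\<one>\<^bsub>dihedral_group n\<^esub>}"
    and S_inv: "\<forall>s\<in>S. inv\<^bsub>dihedral_group n\<^esub> s \<in> S"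
  assumes drg: "distance_regular (carrier (dihedral_group n)) (cayley_adj (dihedral_group n) S) [k, k - 1, k - \<mu>] [1, \<mu>, k]"
    and mu_lt: "\<mu> < k - 1"
  assumes H_ne_C:
    "{g \<in> carrier (dihedral_group n). even (graph_dist (carrier (dihedral_group n)) (cayley_adj (dihedral_group n) S) \<one>\<^bsub>dihedral_group n\<^esub> g)} \<noteq> dihedral_rotations n"
begin

abbreviation "G \<equiv> dihedral_group n"
abbreviation "V \<equiv> carrier G"
abbreviation "adj \<equiv> cayley_adj G S"
abbreviation "e \<equiv> el 0 False"

lemma S_el_inv: "el x p \<in> S \<Longrightarrow> el (if p then x else - x) p \<in> S"
  using S_inv inv_el by metis

lemma adj_el: "adj (el x p) (el y q) \<longleftrightarrow> el (if p = q then x - y else x + y) (p \<noteq> q) \<in> S"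
  unfolding cayley_adj_def inv_el mult_el by (cases p; cases q) (simp_all add: diff_minus_eq_add)

lemma adj_sym: "g \<in> V \<Longrightarrow> h \<in> V \<Longrightarrow> adj g h \<Longrightarrow> adj h g"
proof -
  assume g: "g \<in> V" and h: "h \<in> V" and a: "adj g h"
  obtain x p y q where gh: "g = el x p" "h = el y q" using carrier_el g h by metis
  show "adj h g"
  proof (cases "p = q")
    case True
    then have "el (x - y) False \<in> S" using a gh adj_el by auto
    then have "el (- (x - y)) False \<in> S" using S_el_inv by fastforce
    then show ?thesis using gh adj_el True by auto
  next
    case False
    then show ?thesis using a gh adj_el by (auto simp: add.commute)
  qed
qed

lemma adj_irr: "g \<in> V \<Longrightarrow> \<not> adj g g"
proof
  assume g: "g \<in> V" and a: "adj g g"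
  obtain x p where gh: "g = el x p" using carrier_el g by metis
  then have "el 0 False \<in> S" using a adj_el by auto
  then show False using S_sub one_D by auto
qed

lemmas drgfacts = drg mu_lt adj_sym adj_irr

lemma finV: "finite V" using carrier_D by simp

lemma e_V: "e \<in> V" by (rule el_carrier)

definition phi :: "nat \<times> bool \<Rightarrow> bool" where
  "phi g = odd (graph_dist V adj g e)"

lemma phi_flip: "g \<in> V \<Longrightarrow> h \<in> V \<Longrightarrow> adj g h \<Longrightarrow> phi g \<noteq> phi h"
  unfolding phi_def using parity_flip[OF drgfacts e_V] by blast

lemma adj_mult: "g \<in> V \<Longrightarrow> g' \<in> V \<Longrightarrow> h \<in> V \<Longrightarrow> adj (g \<otimes>\<^bsub>G\<^esub> h) (g' \<otimes>\<^bsub>G\<^esub> h) \<longleftrightarrow> adj g g'"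
proof -
  assume "g \<in> V" "g' \<in> V" "h \<in> V"
  then obtain x p x' p' y q where gh: "g = el x p" "g' = el x' p'" "h = el y q" using carrier_el by metis
  show ?thesis unfolding gh mult_el adj_el
    by (cases p; cases p'; cases q) (simp_all add: algebra_simps)
qed

lemma mult_V: "g \<otimes>\<^bsub>G\<^esub> h \<in> V" if "g \<in> V" "h \<in> V" for g h
  by (metis carrier_el[OF that(1)] carrier_el[OF that(2)] mult_el el_carrier)

lemma phi_e: "\<not> phi e"
proof -
  have "graph_dist V adj e e = 0" using dist_0[OF drgfacts e_V e_V] by blast
  then show ?thesis unfolding phi_def by simp
qed

lemma phi_mult: "g \<in> V \<Longrightarrow> h \<in> V \<Longrightarrow> phi (g \<otimes>\<^bsub>G\<^esub> h) = (phi g \<noteq> phi h)"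
proof -
  assume g: "g \<in> V" and h: "h \<in> V"
  let ?l = "graph_dist V adj g e"
  have w: "walk_of_length V adj ?l g e" using walk_dist[OF drgfacts g e_V] .
  have w2: "walk_of_length V adj ?l (g \<otimes>\<^bsub>G\<^esub> h) (e \<otimes>\<^bsub>G\<^esub> h)"
    by (rule walk_map[OF _ _ w]) (use mult_V h adj_mult in auto)
  have eh: "e \<otimes>\<^bsub>G\<^esub> h = h"
  proof -
    obtain y q where "h = el y q" using carrier_el h by metis
    then show ?thesis by (simp add: mult_el)
  qed
  have "phi h = (phi (g \<otimes>\<^bsub>G\<^esub> h) \<noteq> odd ?l)"
    using walk_parity[of V adj phi, OF phi_flip w2] eh by simp
  moreover have "phi g = odd ?l" by (simp add: phi_def)
  ultimately show ?thesis by blast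
qed

lemma el_diff_mod[simp]: "el (x - z mod int n) p = el (x - z) p"
  by (simp add: el_eq mod_diff_right_eq)
lemma el_add_mod[simp]: "el (x + z mod int n) p = el (x + z) p"
  by (simp add: el_eq mod_add_right_eq)
lemma el_mod_add[simp]: "el (z mod int n + x) p = el (z + x) p"
  by (simp add: el_eq mod_add_left_eq)
lemma el_mod_diff[simp]: "el (z mod int n - x) p = el (z - x) p"
  by (simp add: el_eq mod_diff_left_eq)

lemma el_S_neg: "el (- x) False \<in> S \<longleftrightarrow> el x False \<in> S"
  using S_el_inv[of x False] S_el_inv[of "-x" False] by auto

lemma el_fst: "g \<in> V \<Longrightarrow> el (int (fst g)) (snd g) = g"
  using carrier_el by metis

lemma phi_rot: "phi (el (int a) False) = (odd a \<and> phi (el 1 False))"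
proof (induction a)
  case 0 then show ?case using phi_e by simp
next
  case (Suc a)
  have "el (int (Suc a)) False = el (int a) False \<otimes>\<^bsub>G\<^esub> el 1 False" by (simp add: mult_el add.commute)
  then have "phi (el (int (Suc a)) False) = (phi (el (int a) False) \<noteq> phi (el 1 False))"
    using phi_mult el_carrier by metis
  then show ?case using Suc by auto
qed

definition tau where "tau = phi (el 0 True)"

lemma phi_refl: "phi (el x True) = (phi (el x False) \<noteq> tau)"
proof -
  have "el x True = el x False \<otimes>\<^bsub>G\<^esub> el 0 True" by (simp add: mult_el)
  then show ?thesis using phi_mult el_carrier tau_def by metis
qed

lemma adj_e: "s \<in> V \<Longrightarrow> adj s e \<longleftrightarrow> s \<in> S"
proof -
  assume "s \<in> V"
  then obtain x p where s: "s = el x p" using carrier_el by metis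
  show ?thesis unfolding s adj_el by (cases p) simp_all
qed

lemma S_V: "s \<in> S \<Longrightarrow> s \<in> V" using S_sub by auto

lemma S_phi: "s \<in> S \<Longrightarrow> phi s"
proof -
  assume s: "s \<in> S"
  then have "graph_dist V adj s e = 1" using dist_1[OF drgfacts S_V[OF s] e_V] adj_e S_V by blast
  then show ?thesis by (simp add: phi_def)
qed

lemma k_ge2: "2 \<le> k" using mu_lt by auto

lemma S_ne: "S \<noteq> {}"
proof
  assume "S = {}"
  have "card {z\<in>V. adj e z} = k" using degree[OF drgfacts e_V] .
  moreover have "{z\<in>V. adj e z} = {}"
  proof -
    { fix z assume "z \<in> V" "adj e z"
      then have "adj z e" using adj_sym e_V by blast
      then have "z \<in> S" using adj_e \<open>z \<in> V\<close> by blast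
      then have False using \<open>S = {}\<close> by auto }
    then show ?thesis by auto
  qed
  ultimately show False using k_ge2 by auto
qed

lemma H_eq: "{g\<in>V. even (graph_dist V adj \<one>\<^bsub>G\<^esub> g)} = {g\<in>V. \<not> phi g}"
proof -
  have "graph_dist V adj e e = 0" using dist_0[OF drgfacts e_V e_V] by blast
  then have "\<And>g. g \<in> V \<Longrightarrow> phi g = odd (graph_dist V adj e g)"
    using dist_parity[OF drgfacts e_V e_V] unfolding phi_def by auto
  then show ?thesis using one_D by auto
qed

lemma phi_V: "g \<in> V \<Longrightarrow> phi g = ((odd (fst g) \<and> phi (el 1 False)) \<noteq> (snd g \<and> tau))"
proof -
  assume g: "g \<in> V"
  show ?thesis
  proof (cases "snd g")
    case True
    then have "phi g = phi (el (int (fst g)) True)" using el_fst[OF g] by metis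
    then show ?thesis using phi_refl phi_rot True by simp
  next
    case False
    then have "phi g = phi (el (int (fst g)) False)" using el_fst[OF g] by metis
    then show ?thesis using phi_rot False by simp
  qed
qed

lemma phi1: "phi (el 1 False)"
proof (rule ccontr)
  assume n1: "\<not> phi (el 1 False)"
  obtain s where s: "s \<in> S" using S_ne by auto
  then have "snd s \<and> tau" using S_phi S_V phi_V n1 by fastforce
  then have "\<And>g. g \<in> V \<Longrightarrow> phi g = snd g" using phi_V n1 by auto
  then have "{g\<in>V. even (graph_dist V adj \<one>\<^bsub>G\<^esub> g)} = dihedral_rotations n"
    unfolding H_eq by (auto simp: dihedral_rotations_def carrier_D)
  then show False using H_ne_C by simp
qed

lemma phi_V': "g \<in> V \<Longrightarrow> phi g = (odd (fst g) \<noteq> (snd g \<and> tau))"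
  using phi_V phi1 by simp

end


lemma mod_aux1: "((a + z - y) mod (n::int) + y - a) mod n = z mod n"
proof -
  have "((a + z - y) mod n + y - a) mod n = ((a + z - y) mod n + (y - a)) mod n" by (simp add: algebra_simps)
  also have "\<dots> = ((a + z - y) + (y - a)) mod n" by (rule mod_add_left_eq)
  finally show ?thesis by simp
qed

lemma mod_aux2: "(a + ((v + y - a) mod (n::int)) - y) mod n = v mod n"
proof -
  have "(a + ((v + y - a) mod n) - y) mod n = ((v + y - a) mod n + (a - y)) mod n" by (simp add: algebra_simps)
  also have "\<dots> = ((v + y - a) + (a - y)) mod n" by (rule mod_add_left_eq)
  finally show ?thesis by simp
qed

context cay begin

abbreviation "Cr \<equiv> dihedral_rotations n"
definition "k1 = card (S \<inter> Cr)"

lemma Cr_el: "el x False \<in> Cr"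
  using el_carrier by (auto simp: dihedral_rotations_def carrier_D el_def)

lemma Cr_iff: "g \<in> Cr \<longleftrightarrow> g \<in> V \<and> \<not> snd g"
  by (cases g) (auto simp: dihedral_rotations_def carrier_D)

lemma deg_same:
  assumes g: "g \<in> V"
  shows "card {w\<in>V. snd w = snd g \<and> adj g w} = k1"
  unfolding k1_def
proof (rule card_bij_witness[where f = "\<lambda>w. el (int (fst g) - int (fst w)) False"
      and g = "\<lambda>s. el (int (fst g) - int (fst s)) (snd g)"])
  fix w assume w: "w \<in> {w\<in>V. snd w = snd g \<and> adj g w}"
  then have w1: "w \<in> V" "snd w = snd g" "adj g w" by auto
  have we: "el (int (fst w)) (snd g) = w" using el_fst[OF w1(1)] w1(2) by simp
  have "adj (el (int (fst g)) (snd g)) (el (int (fst w)) (snd g))"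
    using w1(3) el_fst[OF g] we by simp
  then have "el (int (fst g) - int (fst w)) False \<in> S" by (simp add: adj_el)
  moreover have "el (int (fst g) - int (fst (el (int (fst g) - int (fst w)) False))) (snd g) = w"
    using el_fst[OF w1(1)] w1(2) by (simp add: fst_el)
  ultimately show "el (int (fst g) - int (fst w)) False \<in> S \<inter> Cr \<and>
     el (int (fst g) - int (fst (el (int (fst g) - int (fst w)) False))) (snd g) = w"
    using Cr_el by auto
next
  fix s assume s: "s \<in> S \<inter> Cr"
  then have s1: "s \<in> V" "\<not> snd s" "s \<in> S" using Cr_iff by auto
  have se: "el (int (fst s)) False = s" using el_fst[OF s1(1)] s1(2) by simp
  have "adj (el (int (fst g)) (snd g)) (el (int (fst g) - int (fst s)) (snd g))"
    using se s1 by (simp add: adj_el)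
  then have "adj g (el (int (fst g) - int (fst s)) (snd g))" using el_fst[OF g] by metis
  moreover have "el (int (fst g) - int (fst (el (int (fst g) - int (fst s)) (snd g)))) False = s"
    unfolding fst_el el_diff_mod using se by simp
  ultimately show "el (int (fst g) - int (fst s)) (snd g) \<in> {w\<in>V. snd w = snd g \<and> adj g w} \<and>
     el (int (fst g) - int (fst (el (int (fst g) - int (fst s)) (snd g)))) False = s"
    using el_carrier by simp
qed

lemma k1_le: "k1 \<le> k"
proof -
  have "card {w\<in>V. snd w = snd e \<and> adj e w} \<le> card {w\<in>V. adj e w}"
    by (rule card_mono) (use finV in auto)
  then show ?thesis using deg_same[OF e_V] degree[OF drgfacts e_V] by simp
qed

lemma deg_other:
  assumes g: "g \<in> V"
  shows "card {w\<in>V. snd w \<noteq> snd g \<and> adj g w} = k - k1"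
proof -
  have "{w\<in>V. adj g w} = {w\<in>V. snd w = snd g \<and> adj g w} \<union> {w\<in>V. snd w \<noteq> snd g \<and> adj g w}" by auto
  moreover have "card ({w\<in>V. snd w = snd g \<and> adj g w} \<union> {w\<in>V. snd w \<noteq> snd g \<and> adj g w})
     = card {w\<in>V. snd w = snd g \<and> adj g w} + card {w\<in>V. snd w \<noteq> snd g \<and> adj g w}"
    by (rule card_Un_disjoint) (use finV in auto)
  ultimately have "k = k1 + card {w\<in>V. snd w \<noteq> snd g \<and> adj g w}"
    using degree[OF drgfacts g] deg_same[OF g] by simp
  then show ?thesis by simp
qed

lemma NC_NR:
  assumes u: "u \<in> V" "snd u" and y: "y \<in> V" "\<not> snd y"
  shows "card {z\<in>V. \<not> snd z \<and> adj u z \<and> adj z y} = card {z\<in>V. snd z \<and> adj u z \<and> adj z y}"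
proof -
  have ue: "el (int (fst u)) True = u" using el_fst[OF u(1)] u(2) by simp
  have ye: "el (int (fst y)) False = y" using el_fst[OF y(1)] y(2) by simp
  show ?thesis
  proof (rule card_bij_witness[where f = "\<lambda>z. el (int (fst u) + int (fst z) - int (fst y)) True"
      and g = "\<lambda>v. el (int (fst v) + int (fst y) - int (fst u)) False"])
    fix z assume z: "z \<in> {z\<in>V. \<not> snd z \<and> adj u z \<and> adj z y}"
    then have zV: "z \<in> V" "\<not> snd z" "adj u z" "adj z y" by auto
    have ze: "el (int (fst z)) False = z" using el_fst[OF zV(1)] zV(2) by simp
    have "adj (el (int (fst u)) True) (el (int (fst z)) False)" unfolding ue ze by (rule zV(3))
    then have a1: "el (int (fst u) + int (fst z)) True \<in> S" by (simp add: adj_el)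
    have "adj (el (int (fst z)) False) (el (int (fst y)) False)" unfolding ye ze by (rule zV(4))
    then have a2: "el (int (fst z) - int (fst y)) False \<in> S" by (simp add: adj_el)
    let ?v = "el (int (fst u) + int (fst z) - int (fst y)) True"
    have "adj (el (int (fst u)) True) ?v"
      using a2 el_S_neg[of "int (fst z) - int (fst y)"] by (simp add: adj_el)
    then have b1: "adj u ?v" unfolding ue .
    have "adj ?v (el (int (fst y)) False)"
      using a1 by (simp add: adj_el)
    then have b2: "adj ?v y" unfolding ye .
    have "el (int (fst ?v) + int (fst y) - int (fst u)) False = el (int (fst z)) False"
      unfolding fst_el el_eq using mod_aux1 by simp
    then have b3: "el (int (fst ?v) + int (fst y) - int (fst u)) False = z" unfolding ze .
    show "?v \<in> {z\<in>V. snd z \<and> adj u z \<and> adj z y} \<and> el (int (fst ?v) + int (fst y) - int (fst u)) False = z"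
      using el_carrier b1 b2 b3 by simp
  next
    fix v assume v: "v \<in> {z\<in>V. snd z \<and> adj u z \<and> adj z y}"
    then have vV: "v \<in> V" "snd v" "adj u v" "adj v y" by auto
    have ve: "el (int (fst v)) True = v" using el_fst[OF vV(1)] vV(2) by simp
    have "adj (el (int (fst u)) True) (el (int (fst v)) True)" unfolding ue ve by (rule vV(3))
    then have a1: "el (int (fst u) - int (fst v)) False \<in> S" by (simp add: adj_el)
    have "adj (el (int (fst v)) True) (el (int (fst y)) False)" unfolding ye ve by (rule vV(4))
    then have a2: "el (int (fst v) + int (fst y)) True \<in> S" by (simp add: adj_el)
    let ?z = "el (int (fst v) + int (fst y) - int (fst u)) False"
    have "adj (el (int (fst u)) True) ?z"
      using a2 by (simp add: adj_el)
    then have b1: "adj u ?z" unfolding ue .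
    have "adj ?z (el (int (fst y)) False)"
      using a1 el_S_neg[of "int (fst u) - int (fst v)"] by (simp add: adj_el)
    then have b2: "adj ?z y" unfolding ye .
    have "el (int (fst u) + int (fst ?z) - int (fst y)) True = el (int (fst v)) True"
      unfolding fst_el el_eq using mod_aux2 by simp
    then have b3: "el (int (fst u) + int (fst ?z) - int (fst y)) True = v" unfolding ve .
    show "?z \<in> {z\<in>V. \<not> snd z \<and> adj u z \<and> adj z y} \<and> el (int (fst u) + int (fst ?z) - int (fst y)) True = v"
      using el_carrier b1 b2 b3 by simp
  qed
qed

end


lemma double_count:
  assumes "finite A" "finite B"
  shows "(\<Sum>a\<in>A. card {b\<in>B. P a b}) = (\<Sum>b\<in>B. card {a\<in>A. P a b})"
proof -
  have "(\<Sum>a\<in>A. card {b\<in>B. P a b}) = (\<Sum>a\<in>A. \<Sum>b\<in>B. if P a b then 1 else 0)"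
    using assms by (simp add: sum.If_cases Int_def)
  also have "\<dots> = (\<Sum>b\<in>B. \<Sum>a\<in>A. if P a b then 1 else 0)" by (rule sum.swap)
  also have "\<dots> = (\<Sum>b\<in>B. card {a\<in>A. P a b})"
    using assms by (simp add: sum.If_cases Int_def)
  finally show ?thesis .
qed

lemma sum_if_eq:
  assumes "finite A" "x \<in> A"
  shows "(\<Sum>h\<in>A. if h = x then (a::nat) else if P h then b else 0) = a + b * card {h\<in>A. h \<noteq> x \<and> P h}"
proof -
  have "(\<Sum>h\<in>A. if h = x then a else if P h then b else 0)
      = a + (\<Sum>h\<in>A - {x}. if h = x then a else if P h then b else 0)"
    using assms by (simp add: sum.remove)
  also have "(\<Sum>h\<in>A - {x}. if h = x then a else if P h then b else 0) = (\<Sum>h\<in>A - {x}. if P h then b else 0)"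
    by (rule sum.cong) auto
  also have "\<dots> = b * card {h\<in>A - {x}. P h}"
    using assms by (simp add: sum.If_cases Int_def)
  also have "{h\<in>A - {x}. P h} = {h\<in>A. h \<noteq> x \<and> P h}" by auto
  finally show ?thesis .
qed

lemma card_odd: "card {a\<in>{0..<2*m}. odd a = c} = (m::nat)"
proof (cases c)
  case True
  have "{a\<in>{0..<2*m}. odd a = c} = (\<lambda>i. 2*i+1) ` {0..<m}"
  proof (rule equalityI; rule subsetI)
    fix a assume "a \<in> {a\<in>{0..<2*m}. odd a = c}"
    then have "odd a" "a < 2*m" using True by auto
    then obtain i where "a = 2*i+1" by (metis oddE)
    then show "a \<in> (\<lambda>i. 2*i+1) ` {0..<m}" using \<open>a < 2*m\<close> by auto
  qed (use True in auto)
  moreover have "inj_on (\<lambda>i::nat. 2*i+1) {0..<m}" by (auto simp: inj_on_def)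
  ultimately show ?thesis by (simp add: card_image)
next
  case False
  have "{a\<in>{0..<2*m}. odd a = c} = (\<lambda>i. 2*i) ` {0..<m}"
  proof (rule equalityI; rule subsetI)
    fix a assume "a \<in> {a\<in>{0..<2*m}. odd a = c}"
    then have "even a" "a < 2*m" using False by auto
    then obtain i where "a = 2*i" by (metis evenE)
    then show "a \<in> (\<lambda>i. 2*i) ` {0..<m}" using \<open>a < 2*m\<close> by auto
  qed (use False in auto)
  moreover have "inj_on (\<lambda>i::nat. 2*i) {0..<m}" by (auto simp: inj_on_def)
  ultimately show ?thesis by (simp add: card_image)
qed

context cay begin

definition "cntb b g = card {w\<in>V. snd w = b \<and> adj g w}"
definition "NCb b g h = card {z\<in>V. snd z = b \<and> adj g z \<and> adj z h}"
definition "NN g h = card {z\<in>V. adj g z \<and> adj z h}"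

lemma cntb: "g \<in> V \<Longrightarrow> cntb b g = (if b = snd g then k1 else k - k1)"
proof (cases "b = snd g")
  case True
  assume g: "g \<in> V"
  show ?thesis using deg_same[OF g] True unfolding cntb_def by simp
next
  case False
  assume g: "g \<in> V"
  have "{w\<in>V. snd w = b \<and> adj g w} = {w\<in>V. snd w \<noteq> snd g \<and> adj g w}"
    using False by (cases b) auto
  then show ?thesis using deg_other[OF g] False unfolding cntb_def by simp
qed

lemma NN_split: "NN g h = NCb False g h + NCb True g h"
proof -
  have "{z\<in>V. adj g z \<and> adj z h} = {z\<in>V. snd z = False \<and> adj g z \<and> adj z h} \<union> {z\<in>V. snd z = True \<and> adj g z \<and> adj z h}"
    by auto
  moreover have "card ({z\<in>V. snd z = False \<and> adj g z \<and> adj z h} \<union> {z\<in>V. snd z = True \<and> adj g z \<and> adj z h})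
     = card {z\<in>V. snd z = False \<and> adj g z \<and> adj z h} + card {z\<in>V. snd z = True \<and> adj g z \<and> adj z h}"
    by (rule card_Un_disjoint) (use finV in auto)
  ultimately show ?thesis unfolding NN_def NCb_def by simp
qed

lemma NN_val: "g \<in> V \<Longrightarrow> h \<in> V \<Longrightarrow> NN g h = (if g = h then k else if phi g = phi h then \<mu> else 0)"
  unfolding NN_def phi_def using common_nb[OF drgfacts e_V] by blast

lemma sumNCb:
  assumes g: "g \<in> V"
  shows "(\<Sum>h\<in>{h\<in>V. snd h = c}. NCb b g h) = cntb b g * (if c = b then k1 else k - k1)"
proof -
  have "(\<Sum>h\<in>{h\<in>V. snd h = c}. NCb b g h) = (\<Sum>z\<in>V. card {h\<in>{h\<in>V. snd h = c}. snd z = b \<and> adj g z \<and> adj z h})"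
    unfolding NCb_def by (rule double_count) (use finV in auto)
  also have "\<dots> = (\<Sum>z\<in>V. if snd z = b \<and> adj g z then cntb c z else 0)"
    by (rule sum.cong) (auto simp: cntb_def intro: arg_cong[where f = card])
  also have "\<dots> = (\<Sum>z\<in>{z\<in>V. snd z = b \<and> adj g z}. cntb c z)"
    using finV by (simp add: sum.inter_filter)
  also have "\<dots> = (\<Sum>z\<in>{z\<in>V. snd z = b \<and> adj g z}. (if c = b then k1 else k - k1))"
    by (rule sum.cong) (auto simp: cntb)
  also have "\<dots> = cntb b g * (if c = b then k1 else k - k1)"
    by (simp add: cntb_def)
  finally show ?thesis .
qed

lemma sumNN:
  assumes g: "g \<in> V"
  shows "(\<Sum>h\<in>{h\<in>V. snd h = c}. NN g h) = cntb False g * (if c = False then k1 else k - k1) + cntb True g * (if c = True then k1 else k - k1)"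
  unfolding NN_split sum.distrib sumNCb[OF g] by simp

lemma card_phi: "card {y\<in>V. snd y = q \<and> phi y = b} = m"
proof -
  have "{y\<in>V. snd y = q \<and> phi y = b} = (\<lambda>a. (a, q)) ` {a\<in>{0..<2*m}. odd a = (b \<noteq> (q \<and> tau))}"
  proof (rule equalityI; rule subsetI)
    fix y assume y: "y \<in> {y\<in>V. snd y = q \<and> phi y = b}"
    obtain a q' where yy: "y = (a, q')" by (cases y)
    have yV: "y \<in> V" "snd y = q" "phi y = b" using y by auto
    then have "q' = q" "a < n" using yy by (auto simp: carrier_D)
    then have "q' = q" "a < 2*m" using nm by auto
    moreover have "odd a = (b \<noteq> (q \<and> tau))" using phi_V'[OF yV(1)] yV yy by auto
    ultimately show "y \<in> (\<lambda>a. (a, q)) ` {a\<in>{0..<2*m}. odd a = (b \<noteq> (q \<and> tau))}"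
      using yy by (intro image_eqI[where x = a]) auto
  next
    fix y assume "y \<in> (\<lambda>a. (a, q)) ` {a\<in>{0..<2*m}. odd a = (b \<noteq> (q \<and> tau))}"
    then obtain a where "y = (a, q)" "a < 2*m" "odd a = (b \<noteq> (q \<and> tau))" by auto
    moreover then have "a < n" using nm by simp
    moreover then have "y \<in> V" using \<open>y = (a,q)\<close> by (auto simp: carrier_D)
    ultimately show "y \<in> {y\<in>V. snd y = q \<and> phi y = b}" using phi_V'[of y] by auto
  qed
  moreover have "inj_on (\<lambda>a::nat. (a, q)) A" for A by (auto simp: inj_on_def)
  ultimately show ?thesis using card_odd by (simp add: card_image)
qed

definition "k2 = k - k1"

lemma ident1: "k1 * k1 + k2 * k2 = k + \<mu> * (m - 1)"
proof -
  have ss: "(\<Sum>h\<in>{h\<in>V. snd h = False}. NN e h) = k1 * k1 + k2 * k2"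
    unfolding sumNN[OF e_V] using cntb[OF e_V] by (simp add: k2_def)
  have "(\<Sum>h\<in>{h\<in>V. snd h = False}. NN e h) = (\<Sum>h\<in>{h\<in>V. snd h = False}. if h = e then k else if phi h = phi e then \<mu> else 0)"
    by (rule sum.cong) (auto simp: NN_val e_V eq_commute)
  also have "\<dots> = k + \<mu> * card {h\<in>{h\<in>V. snd h = False}. h \<noteq> e \<and> phi h = phi e}"
    by (rule sum_if_eq) (use finV e_V in auto)
  also have "{h\<in>{h\<in>V. snd h = False}. h \<noteq> e \<and> phi h = phi e} = {y\<in>V. snd y = False \<and> phi y = phi e} - {e}"
    by auto
  also have "card \<dots> = m - 1" using card_phi[of False "phi e"] e_V finV by (simp add: card_Diff_singleton)
  finally show ?thesis using ss by simp
qed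

lemma ident2: "2 * k1 * k2 = \<mu> * m"
proof -
  have ss: "(\<Sum>h\<in>{h\<in>V. snd h = True}. NN e h) = 2 * k1 * k2"
    unfolding sumNN[OF e_V] using cntb[OF e_V] by (simp add: k2_def)
  have "(\<Sum>h\<in>{h\<in>V. snd h = True}. NN e h) = (\<Sum>h\<in>{h\<in>V. snd h = True}. if phi h = phi e then \<mu> else 0)"
    by (rule sum.cong) (auto simp: NN_val e_V eq_commute)
  also have "\<dots> = \<mu> * card {y\<in>V. snd y = True \<and> phi y = phi e}"
    using finV by (simp add: sum.If_cases Int_def conj_commute conj_left_commute)
  also have "\<dots> = \<mu> * m" using card_phi[of True "phi e"] by simp
  finally show ?thesis using ss by simp
qed

end


context cay begin

definition "Wn y = {w\<in>V. \<not> snd w \<and> adj w y}"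
definition "T3 x y = (\<Sum>w\<in>Wn y. NCb False x w)"

lemma Wn_card: "y \<in> V \<Longrightarrow> \<not> snd y \<Longrightarrow> card (Wn y) = k1"
proof -
  assume y: "y \<in> V" "\<not> snd y"
  have "Wn y = {w\<in>V. snd w = False \<and> adj y w}" unfolding Wn_def using adj_sym y(1) by blast
  then show ?thesis using cntb[OF y(1), of False] y unfolding cntb_def by simp
qed

lemma finWn: "finite (Wn y)" unfolding Wn_def using finV by simp

lemma T3_same:
  assumes x: "x \<in> V" and y: "y \<in> V" and p: "phi x = phi y"
  shows "T3 x y = 0"
proof -
  have "NCb False x w = 0" if w: "w \<in> Wn y" for w
  proof -
    have "{z\<in>V. snd z = False \<and> adj x z \<and> adj z w} = {}"
    proof (rule ccontr)
      assume "{z\<in>V. snd z = False \<and> adj x z \<and> adj z w} \<noteq> {}"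
      then obtain z where z: "z \<in> V" "adj x z" "adj z w" by auto
      have wV: "w \<in> V" "adj w y" using w unfolding Wn_def by auto
      show False using phi_flip[OF x z(1) z(2)] phi_flip[OF z(1) wV(1) z(3)] phi_flip[OF wV(1) y wV(2)] p by auto
    qed
    then show ?thesis unfolding NCb_def by (metis card.empty)
  qed
  then show ?thesis unfolding T3_def by simp
qed

lemma T3_val:
  assumes x: "x \<in> V" "\<not> snd x" and y: "y \<in> V" "\<not> snd y" and p: "phi x \<noteq> phi y"
  shows "2 * int (T3 x y) = 2 * (int k - int \<mu>) * (if adj x y then 1 else 0) + int \<mu> * (2 * int k1 - int k2)"
proof -
  let ?W = "Wn y"
  have W_phi: "w \<in> V \<and> phi w = phi x" if "w \<in> ?W" for w
    using that phi_flip[of w y] y p unfolding Wn_def by auto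
  have s1: "(\<Sum>w\<in>?W. NN x w) = (\<Sum>w\<in>?W. if w = x then k else if True then \<mu> else 0)"
    by (rule sum.cong) (use W_phi NN_val x in auto)
  have xW: "x \<in> ?W \<longleftrightarrow> adj x y" unfolding Wn_def using x by auto
  have s1v: "(\<Sum>w\<in>?W. NN x w) = (if adj x y then k + \<mu> * (k1 - 1) else \<mu> * k1)"
  proof (cases "adj x y")
    case True
    then have "(\<Sum>w\<in>?W. NN x w) = k + \<mu> * card {h\<in>?W. h \<noteq> x \<and> True}"
      unfolding s1 by (intro sum_if_eq finWn) (use xW in auto)
    also have "{h\<in>?W. h \<noteq> x \<and> True} = ?W - {x}" by auto
    also have "card (?W - {x}) = k1 - 1" using Wn_card[OF y] xW True finWn by (simp add: card_Diff_singleton)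
    finally show ?thesis using True by simp
  next
    case False
    have "(\<Sum>w\<in>?W. NN x w) = (\<Sum>w\<in>?W. \<mu>)"
      unfolding s1 by (rule sum.cong) (use xW False in auto)
    then show ?thesis using Wn_card[OF y] False by simp
  qed
  let ?U = "{u\<in>V. snd u \<and> adj x u}"
  have "(\<Sum>w\<in>?W. NCb True x w) = (\<Sum>w\<in>?W. card {u\<in>V. snd u = True \<and> adj x u \<and> adj u w})"
    unfolding NCb_def ..
  also have "\<dots> = (\<Sum>u\<in>V. card {w\<in>?W. snd u = True \<and> adj x u \<and> adj u w})"
    by (rule double_count) (use finV finWn in auto)
  also have "\<dots> = (\<Sum>u\<in>V. if snd u \<and> adj x u then NCb False u y else 0)"
    by (rule sum.cong) (auto simp: NCb_def Wn_def intro!: arg_cong[where f = card])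
  also have "\<dots> = (\<Sum>u\<in>?U. NCb False u y)"
    using finV by (simp add: sum.inter_filter)
  finally have s2a: "(\<Sum>w\<in>?W. NCb True x w) = (\<Sum>u\<in>?U. NCb False u y)" .
  have u2: "2 * NCb False u y = \<mu>" if u: "u \<in> ?U" for u
  proof -
    have uV: "u \<in> V" "snd u" "adj x u" using u by auto
    have "phi u = phi y" using phi_flip[OF x(1) uV(1) uV(3)] p by auto
    moreover have "u \<noteq> y" using uV y by auto
    ultimately have "NN u y = \<mu>" using NN_val[OF uV(1) y(1)] by simp
    moreover have "NCb False u y = NCb True u y" unfolding NCb_def using NC_NR[OF uV(1,2) y] by simp
    ultimately show ?thesis using NN_split[of u y] by simp
  qed
  have cU: "card ?U = k2"
  proof -
    have "?U = {w\<in>V. snd w = True \<and> adj x w}" by auto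
    then show ?thesis using cntb[OF x(1), of True] x unfolding cntb_def k2_def by simp
  qed
  have s2: "2 * (\<Sum>w\<in>?W. NCb True x w) = \<mu> * k2"
  proof -
    have "2 * (\<Sum>w\<in>?W. NCb True x w) = (\<Sum>u\<in>?U. 2 * NCb False u y)"
      unfolding s2a by (simp add: sum_distrib_left)
    also have "\<dots> = (\<Sum>u\<in>?U. \<mu>)" by (rule sum.cong) (use u2 in auto)
    finally show ?thesis using cU by simp
  qed
  have "T3 x y + (\<Sum>w\<in>?W. NCb True x w) = (\<Sum>w\<in>?W. NN x w)"
    unfolding T3_def NN_split sum.distrib ..
  then have "2 * int (T3 x y) = 2 * int (\<Sum>w\<in>?W. NN x w) - int \<mu> * int k2"
    using s2 by (metis (no_types, opaque_lifting) add_diff_cancel_right' distrib_left_numeral of_nat_add of_nat_mult of_nat_numeral)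
  moreover have "adj x y \<Longrightarrow> 1 \<le> k1" using Wn_card[OF y] xW finWn
    by (metis One_nat_def Suc_leI card_gt_0_iff empty_iff)
  ultimately show ?thesis using s1v
    by (cases "adj x y") (simp_all add: algebra_simps of_nat_diff)
qed

end


context cay begin

abbreviation "adjC \<equiv> cayley_adj G (S \<inter> Cr)"

lemma adjC_iff: "x \<in> Cr \<Longrightarrow> y \<in> Cr \<Longrightarrow> adjC x y \<longleftrightarrow> adj x y"
proof -
  assume "x \<in> Cr" "y \<in> Cr"
  then have xy: "x \<in> V" "\<not> snd x" "y \<in> V" "\<not> snd y" using Cr_iff by auto
  have xe: "el (int (fst x)) False = x" using el_fst[OF xy(1)] xy(2) by simp
  have ye: "el (int (fst y)) False = y" using el_fst[OF xy(3)] xy(4) by simp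
  have "adjC (el (int (fst x)) False) (el (int (fst y)) False) \<longleftrightarrow> adj (el (int (fst x)) False) (el (int (fst y)) False)"
    unfolding cayley_adj_def inv_el mult_el using Cr_el by simp
  then show ?thesis unfolding xe ye .
qed

definition "Pset = {x\<in>Cr. phi x}"
definition "Bset = {x\<in>Cr. \<not> phi x}"
definition "Dset p B = {(p', B'). p' \<in> Pset \<and> B' \<in> Bset \<and> adjC p' B' \<and> p' \<noteq> p \<and> B' \<noteq> B \<and> adjC p' B \<and> adjC p B'}"

lemma NCb_self: "p \<in> V \<Longrightarrow> \<not> snd p \<Longrightarrow> NCb False p p = k1"
proof -
  assume p: "p \<in> V" "\<not> snd p"
  have "{z\<in>V. snd z = False \<and> adj p z \<and> adj z p} = {w\<in>V. snd w = False \<and> adj p w}"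
    using adj_sym p(1) by blast
  then show ?thesis unfolding NCb_def using cntb[OF p(1), of False] p unfolding cntb_def by simp
qed

lemma Dcount:
  assumes p: "p \<in> Pset" and B: "B \<in> Bset"
  shows "int (card (Dset p B)) = int (T3 p B) - (if adj p B then 2 * int k1 - 1 else 0)"
proof -
  have pV: "p \<in> V" "\<not> snd p" "phi p" using p Cr_iff unfolding Pset_def by auto
  have BV: "B \<in> V" "\<not> snd B" "\<not> phi B" using B Cr_iff unfolding Bset_def by auto
  let ?F = "\<lambda>p'. {z\<in>V. \<not> snd z \<and> adj p z \<and> adj z p'} - {B}"
  have DS: "Dset p B = Sigma (Wn B - {p}) ?F"
  proof (rule equalityI; rule subsetI)
    fix q assume q: "q \<in> Dset p B"
    then obtain p' B' where q': "q = (p', B')" by (cases q)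
    have qq: "p' \<in> Pset" "B' \<in> Bset" "adjC p' B'" "p' \<noteq> p" "B' \<noteq> B" "adjC p' B" "adjC p B'"
      using q unfolding q' Dset_def by auto
    have C4: "p' \<in> Cr" "B' \<in> Cr" "p \<in> Cr" "B \<in> Cr" using qq p B unfolding Pset_def Bset_def by auto
    have a1: "adj p' B'" "adj p' B" "adj p B'" using qq(3,6,7) adjC_iff C4 by auto
    have V4: "p' \<in> V" "\<not> snd p'" "B' \<in> V" "\<not> snd B'" using C4 Cr_iff by auto
    have a2: "adj B' p'" using adj_sym[OF V4(1) V4(3) a1(1)] .
    have "p' \<in> Wn B - {p}" using V4 a1 qq(4) unfolding Wn_def by simp
    moreover have "B' \<in> ?F p'" using V4 a1 a2 qq(5) by simp
    ultimately show "q \<in> Sigma (Wn B - {p}) ?F" unfolding q' by simp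
  next
    fix q assume q: "q \<in> Sigma (Wn B - {p}) ?F"
    then obtain p' B' where q': "q = (p', B')" by (cases q)
    have p'V: "p' \<in> V" "\<not> snd p'" "adj p' B" "p' \<noteq> p" using q q' unfolding Wn_def by auto
    have B'V: "B' \<in> V" "\<not> snd B'" "adj p B'" "adj B' p'" "B' \<noteq> B" using q q' by auto
    have "phi p'" using phi_flip[OF p'V(1) BV(1) p'V(3)] BV by simp
    moreover have "\<not> phi B'" using phi_flip[OF pV(1) B'V(1) B'V(3)] pV by simp
    moreover have "p' \<in> Cr" "B' \<in> Cr" "p \<in> Cr" "B \<in> Cr" using p'V B'V pV BV Cr_iff by auto
    moreover have "adj p' B'" using adj_sym[OF B'V(1) p'V(1) B'V(4)] .
    ultimately have "p' \<in> Pset" "B' \<in> Bset" "adjC p' B'" "adjC p' B" "adjC p B'"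
      using p'V B'V adjC_iff unfolding Pset_def Bset_def by auto
    then show "q \<in> Dset p B"
      using q' p'V(4) B'V(5) unfolding Dset_def by simp
  qed
  have fin: "finite (Wn B - {p})" using finWn by simp
  have Fc: "int (card (?F p')) = int (NCb False p p') - (if adj p B then 1 else 0)" if p': "p' \<in> Wn B" for p'
  proof -
    have p'V: "p' \<in> V" "adj p' B" using p' unfolding Wn_def by auto
    have "B \<in> {z\<in>V. \<not> snd z \<and> adj p z \<and> adj z p'} \<longleftrightarrow> adj p B"
      using BV adj_sym[OF p'V(1) BV(1) p'V(2)] by auto
    moreover have "finite {z\<in>V. \<not> snd z \<and> adj p z \<and> adj z p'}" using finV by simp
    ultimately show ?thesis
    proof (cases "adj p B")
      case True
      let ?X = "{z\<in>V. \<not> snd z \<and> adj p z \<and> adj z p'}"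
      assume h: "B \<in> ?X \<longleftrightarrow> adj p B" "finite ?X"
      then have "B \<in> ?X" using True by blast
      then have "0 < card ?X" using h(2) card_gt_0_iff by blast
      then show ?thesis using True h \<open>B \<in> ?X\<close> by (simp add: card_Diff_singleton of_nat_diff NCb_def)
    qed (auto simp: NCb_def)
  qed
  have "int (card (Dset p B)) = (\<Sum>p'\<in>Wn B - {p}. int (card (?F p')))"
    unfolding DS using fin finV by (simp add: card_SigmaI)
  also have "\<dots> = (\<Sum>p'\<in>Wn B - {p}. int (NCb False p p') - (if adj p B then 1 else 0))"
    by (rule sum.cong) (use Fc in auto)
  also have "\<dots> = (\<Sum>p'\<in>Wn B - {p}. int (NCb False p p')) - (if adj p B then 1 else 0) * int (card (Wn B - {p}))"
    by (simp add: sum_subtractf)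
  also have "(\<Sum>p'\<in>Wn B - {p}. int (NCb False p p')) = int (T3 p B) - (if adj p B then int k1 else 0)"
  proof -
    have pW: "p \<in> Wn B \<longleftrightarrow> adj p B" using pV unfolding Wn_def by auto
    have "(\<Sum>p'\<in>Wn B - {p}. int (NCb False p p')) = (if p \<in> Wn B then (\<Sum>p'\<in>Wn B. int (NCb False p p')) - int (NCb False p p) else (\<Sum>p'\<in>Wn B. int (NCb False p p')))"
      by (rule sum_diff1) (rule finWn)
    then show ?thesis using pW NCb_self[OF pV(1,2)] unfolding T3_def by simp
  qed
  also have "int (card (Wn B - {p})) = int k1 - (if adj p B then 1 else 0)"
  proof -
    have pW: "p \<in> Wn B \<longleftrightarrow> adj p B" using pV unfolding Wn_def by auto
    show ?thesis
    proof (cases "adj p B")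
      case True
      then have "p \<in> Wn B" using pW by simp
      then have "0 < card (Wn B)" using finWn card_gt_0_iff by blast
      then show ?thesis using True \<open>p \<in> Wn B\<close> Wn_card[OF BV(1,2)] finWn
        by (simp add: card_Diff_singleton of_nat_diff)
    qed (use pW Wn_card[OF BV(1,2)] in simp)
  qed
  finally show ?thesis by (cases "adj p B") (simp_all add: algebra_simps)
qed

end


context cay begin

lemma k_split: "k = k1 + k2" using k1_le unfolding k2_def by simp

lemma m_pos: "0 < m" using npos nm by simp

lemma sq_id: "(int k1 - int k2)^2 = int k - int \<mu>"
proof -
  have a: "int k1 * int k1 + int k2 * int k2 = int k + int \<mu> * (int m - 1)"
    using ident1 m_pos by (metis (no_types, lifting) One_nat_def Suc_leI of_nat_1 of_nat_add of_nat_diff of_nat_mult)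
  have b: "2 * int k1 * int k2 = int \<mu> * int m"
    using ident2 by (metis of_nat_mult of_nat_numeral)
  show ?thesis using a b by (simp add: power2_eq_square algebra_simps)
qed

lemma k1_pos: "0 < k1"
proof (rule ccontr)
  assume "\<not> 0 < k1"
  then have k10: "k1 = 0" by simp
  then have "\<mu> * m = 0" using ident2 by simp
  then have "\<mu> = 0" using m_pos by simp
  then have "k2 * k2 = k" using ident1 k10 by simp
  moreover have "k2 = k" using k_split k10 by simp
  ultimately have "k * k = k" by simp
  moreover have "2 * k \<le> k * k" using k_ge2 by (simp add: mult_le_mono1)
  ultimately show False using k_ge2 by linarith
qed

lemma Wn_e_sub: "Wn e \<subseteq> {y\<in>V. snd y = False \<and> phi y = True}"
proof
  fix y assume "y \<in> Wn e"
  then have y: "y \<in> V" "\<not> snd y" "adj y e" unfolding Wn_def by auto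
  then have "phi y" using phi_flip[OF y(1) e_V y(3)] phi_e by simp
  then show "y \<in> {y\<in>V. snd y = False \<and> phi y = True}" using y by simp
qed

lemma k1_le_m: "k1 \<le> m"
proof -
  have "card (Wn e) \<le> card {y\<in>V. snd y = False \<and> phi y = True}"
    by (rule card_mono) (use finV Wn_e_sub in auto)
  then show ?thesis using Wn_card[OF e_V] card_phi[of False True] by simp
qed

lemma k1_ne_m: "k1 \<noteq> m"
proof
  assume h: "k1 = m"
  have a: "int k1 * int k1 + int k2 * int k2 = int k + int \<mu> * (int m - 1)"
    using ident1 m_pos by (metis (no_types, lifting) One_nat_def Suc_leI of_nat_1 of_nat_add of_nat_diff of_nat_mult)
  have b: "2 * int k1 * int k2 = int \<mu> * int m"
    using ident2 by (metis of_nat_mult of_nat_numeral)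
  have mu2: "int \<mu> = 2 * int k2" using b h m_pos by (simp add: algebra_simps)
  have kk: "int k = int k1 + int k2" using k_split by simp
  have lt: "int \<mu> < int k - 1" using mu_lt k_ge2 by linarith
  define d where "d = int m - int k2"
  have dd: "d * d = d" using a mu2 kk h unfolding d_def by (simp add: algebra_simps)
  have "d \<ge> 2" using lt mu2 kk h unfolding d_def by simp
  then have "d * d \<ge> 2 * d" by (simp add: mult_right_mono)
  then show False using dd \<open>d \<ge> 2\<close> by simp
qed

lemma k1_lt_m: "k1 < m" using k1_le_m k1_ne_m by simp

definition "cc = int \<mu> * (2 * int k1 - int k2)"

lemma nonadj_pair: "\<exists>x. x \<in> V \<and> \<not> snd x \<and> phi x \<and> \<not> adj x e"
proof -
  have "card (Wn e) < card {y\<in>V. snd y = False \<and> phi y = True}"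
    using Wn_card[OF e_V] card_phi[of False True] k1_lt_m by simp
  moreover have "card Y \<le> card (Wn e)" if "Y \<subseteq> Wn e" for Y using card_mono[OF finWn that] .
  ultimately have "\<not> {y\<in>V. snd y = False \<and> phi y = True} \<subseteq> Wn e" by (meson leD)
  then obtain x where "x \<in> {y\<in>V. snd y = False \<and> phi y = True}" "x \<notin> Wn e" by blast
  then show ?thesis unfolding Wn_def by blast
qed

lemma cc_props: "cc \<ge> 0 \<and> 2 * (cc div 2) = cc"
proof -
  obtain x where x: "x \<in> V" "\<not> snd x" "phi x" "\<not> adj x e" using nonadj_pair by blast
  have "2 * int (T3 x e) = cc" using T3_val[OF x(1,2) e_V _] x phi_e unfolding cc_def by simp
  then have "cc = 2 * int (T3 x e)" by simp
  then show ?thesis by simp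
qed

definition "alpha = nat (cc div 2)"
definition "beta = nat (int alpha + int k - int \<mu> - 2 * int k1 + 1)"

lemma alpha_int: "2 * int alpha = cc" using cc_props unfolding alpha_def by simp

lemma Dcount_val:
  assumes p: "p \<in> Pset" and B: "B \<in> Bset"
  shows "int (card (Dset p B)) = (if adj p B then int alpha + int k - int \<mu> - 2 * int k1 + 1 else int alpha)"
proof -
  have pV: "p \<in> V" "\<not> snd p" "phi p" using p Cr_iff unfolding Pset_def by auto
  have BV: "B \<in> V" "\<not> snd B" "\<not> phi B" using B Cr_iff unfolding Bset_def by auto
  have "2 * int (T3 p B) = 2 * (int k - int \<mu>) * (if adj p B then 1 else 0) + cc"
    using T3_val[OF pV(1,2) BV(1,2)] pV BV unfolding cc_def by simp
  note h = this
  show ?thesis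
  proof (cases "adj p B")
    case True
    have h1: "2 * int (T3 p B) = 2 * int k - 2 * int \<mu> + cc" using h True by (simp add: algebra_simps)
    have h2: "int (card (Dset p B)) = int (T3 p B) - (2 * int k1 - 1)" using Dcount[OF p B] True by simp
    have "int (T3 p B) = int k - int \<mu> + int alpha" using h1 alpha_int by linarith
    then show ?thesis using h2 True by simp
  next
    case False
    have h1: "2 * int (T3 p B) = cc" using h False by simp
    have h2: "int (card (Dset p B)) = int (T3 p B)" using Dcount[OF p B] False by simp
    have "int (T3 p B) = int alpha" using h1 alpha_int by linarith
    then show ?thesis using h2 False by simp
  qed
qed

lemma beta_int: "int beta = int alpha + int k - int \<mu> - 2 * int k1 + 1"
proof -
  have "Wn e \<noteq> {}" using Wn_card[OF e_V] k1_pos by auto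
  then obtain x where x: "x \<in> Wn e" by blast
  then have xV: "x \<in> V" "\<not> snd x" "adj x e" unfolding Wn_def by auto
  have "phi x" using phi_flip[OF xV(1) e_V xV(3)] phi_e by simp
  then have "x \<in> Pset" "e \<in> Bset" using xV Cr_iff e_V phi_e unfolding Pset_def Bset_def by auto
  then have "int alpha + int k - int \<mu> - 2 * int k1 + 1 \<ge> 0" using Dcount_val xV(3) by fastforce
  then show ?thesis unfolding beta_def by simp
qed

lemma design:
  "\<exists>\<alpha> \<beta> :: nat.
        spgd_incidence_graph Cr adjC m k1 \<alpha> \<beta> \<and>
        real \<alpha> = real \<mu> * (2 * real k1 - real k2) / 2 \<and>
        2 * int k1 - 1 + int \<beta> - int \<alpha> = (int k1 - int k2)^2 \<and>
        (int k1 - int k2)^2 = int k - int \<mu>"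
proof (intro exI conjI)
  show "real alpha = real \<mu> * (2 * real k1 - real k2) / 2"
  proof -
    have "real_of_int (2 * int alpha) = real_of_int cc" using alpha_int by simp
    then show ?thesis unfolding cc_def by simp
  qed
  show "2 * int k1 - 1 + int beta - int alpha = (int k1 - int k2)^2"
    using beta_int sq_id by simp
  show "(int k1 - int k2)^2 = int k - int \<mu>" by (rule sq_id)
  show "spgd_incidence_graph Cr adjC m k1 alpha beta"
    unfolding spgd_incidence_graph_def
  proof (rule exI[of _ Pset], rule exI[of _ Bset], intro conjI ballI)
    show "Pset \<inter> Bset = {}" unfolding Pset_def Bset_def by auto
    show "Pset \<union> Bset = Cr" unfolding Pset_def Bset_def by auto
    have "Pset = {y\<in>V. snd y = False \<and> phi y = True}" unfolding Pset_def using Cr_iff by auto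
    then show "card Pset = m" using card_phi[of False True] by simp
    have "Bset = {y\<in>V. snd y = False \<and> phi y = False}" unfolding Bset_def using Cr_iff by auto
    then show "card Bset = m" using card_phi[of False False] by simp
    show "finite Cr" by (simp add: dihedral_rotations_def)
  next
    fix x y assume xy: "x \<in> Cr" "y \<in> Cr"
    have V2: "x \<in> V" "y \<in> V" using xy Cr_iff by auto
    show "adjC x y = (x \<in> Pset \<and> y \<in> Bset \<and> adjC x y \<or> x \<in> Bset \<and> y \<in> Pset \<and> adjC y x)"
    proof
      assume a: "adjC x y"
      then have "adj x y" using adjC_iff xy by simp
      then have ph: "phi x \<noteq> phi y" "adj y x" using phi_flip[OF V2 \<open>adj x y\<close>] adj_sym[OF V2 \<open>adj x y\<close>] by auto
      then have "adjC y x" using adjC_iff[OF xy(2) xy(1)] by simp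
      then show "x \<in> Pset \<and> y \<in> Bset \<and> adjC x y \<or> x \<in> Bset \<and> y \<in> Pset \<and> adjC y x"
        using a xy ph(1) unfolding Pset_def Bset_def by blast
    next
      assume "x \<in> Pset \<and> y \<in> Bset \<and> adjC x y \<or> x \<in> Bset \<and> y \<in> Pset \<and> adjC y x"
      moreover have "adjC y x \<Longrightarrow> adjC x y"
        using adjC_iff[OF xy(2) xy(1)] adjC_iff[OF xy] adj_sym[OF V2(2) V2(1)] by blast
      ultimately show "adjC x y" by blast
    qed
  next
    fix B assume B: "B \<in> Bset"
    have BV: "B \<in> V" "\<not> snd B" "\<not> phi B" using B Cr_iff unfolding Bset_def by auto
    have "{p\<in>Pset. adjC p B} = Wn B"
    proof (rule equalityI; rule subsetI)
      fix p assume "p \<in> {p\<in>Pset. adjC p B}"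
      then have pC: "p \<in> Cr" "adjC p B" unfolding Pset_def by auto
      have BC: "B \<in> Cr" using B unfolding Bset_def by auto
      have "adj p B" using adjC_iff[OF pC(1) BC] pC(2) by simp
      then show "p \<in> Wn B" using pC(1) Cr_iff unfolding Wn_def by auto
    next
      fix p assume p: "p \<in> Wn B"
      then have pV: "p \<in> V" "\<not> snd p" "adj p B" unfolding Wn_def by auto
      then have "phi p" using phi_flip[OF pV(1) BV(1) pV(3)] BV by simp
      have BC: "B \<in> Cr" using B unfolding Bset_def by auto
      have pC: "p \<in> Cr" using pV Cr_iff by auto
      have "adjC p B" using adjC_iff[OF pC BC] pV(3) by simp
      then show "p \<in> {p\<in>Pset. adjC p B}" using pC \<open>phi p\<close> unfolding Pset_def by auto
    qed
    then show "card {p\<in>Pset. adjC p B} = k1" using Wn_card[OF BV(1,2)] by simp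
  next
    fix p assume p: "p \<in> Pset"
    have pV: "p \<in> V" "\<not> snd p" "phi p" using p Cr_iff unfolding Pset_def by auto
    have "{B\<in>Bset. adjC p B} = {w\<in>V. snd w = False \<and> adj p w}"
    proof (rule equalityI; rule subsetI)
      fix B assume "B \<in> {B\<in>Bset. adjC p B}"
      then have BC: "B \<in> Cr" "adjC p B" unfolding Bset_def by auto
      have pC: "p \<in> Cr" using p unfolding Pset_def by auto
      have "adj p B" using adjC_iff[OF pC BC(1)] BC(2) by simp
      then show "B \<in> {w\<in>V. snd w = False \<and> adj p w}" using BC(1) Cr_iff by auto
    next
      fix B assume B: "B \<in> {w\<in>V. snd w = False \<and> adj p w}"
      then have BV: "B \<in> V" "\<not> snd B" "adj p B" by auto
      then have "\<not> phi B" using phi_flip[OF pV(1) BV(1) BV(3)] pV by simp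
      have BC: "B \<in> Cr" using BV Cr_iff by auto
      have pC: "p \<in> Cr" using p unfolding Pset_def by auto
      have "adjC p B" using adjC_iff[OF pC BC] BV(3) by simp
      then show "B \<in> {B\<in>Bset. adjC p B}" using BC \<open>\<not> phi B\<close> unfolding Bset_def by auto
    qed
    then show "card {B\<in>Bset. adjC p B} = k1" using cntb[OF pV(1), of False] pV unfolding cntb_def by simp
  next
    fix p B assume p: "p \<in> Pset" and B: "B \<in> Bset"
    have "p \<in> Cr" "B \<in> Cr" using p B unfolding Pset_def Bset_def by auto
    then have "adjC p B \<longleftrightarrow> adj p B" using adjC_iff by blast
    then have "int (card (Dset p B)) = int (if adjC p B then beta else alpha)"
      using Dcount_val[OF p B] beta_int by simp
    then show "card {(p', B'). p' \<in> Pset \<and> B' \<in> Bset \<and> adjC p' B' \<and> p' \<noteq> p \<and> B' \<noteq> B \<and> adjC p' B \<and> adjC p B'}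
       = (if adjC p B then beta else alpha)"
      unfolding Dset_def by linarith
  qed
qed

end


context cay begin

definition "Mop (f :: nat \<times> bool \<Rightarrow> real) x = (\<Sum>y\<in>{y\<in>Cr. adj x y}. f y)"
definition "ind b = (if b then 1 else (0::real))"

lemma finCr: "finite Cr" by (simp add: dihedral_rotations_def)

lemma Mop_ind: "Mop f x = (\<Sum>y\<in>Cr. ind (adj x y) * f y)"
proof -
  have "Mop f x = (\<Sum>y\<in>Cr. if adj x y then f y else 0)"
    unfolding Mop_def using finCr by (simp add: sum.inter_filter)
  also have "\<dots> = (\<Sum>y\<in>Cr. ind (adj x y) * f y)" by (rule sum.cong) (auto simp: ind_def)
  finally show ?thesis .
qed

lemma Mop_add: "Mop (\<lambda>y. g y + h y) x = Mop g x + Mop h x"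
  unfolding Mop_def by (simp add: sum.distrib)

lemma Mop_scale: "Mop (\<lambda>y. c * g y) x = c * Mop g x"
  unfolding Mop_def by (simp add: sum_distrib_left)

lemma Mop_cong: "(\<And>y. y \<in> Cr \<Longrightarrow> g y = h y) \<Longrightarrow> Mop g x = Mop h x"
  unfolding Mop_def by (rule sum.cong) auto

lemma card_real: "finite A \<Longrightarrow> real (card {z\<in>A. P z}) = (\<Sum>z\<in>A. ind (P z))"
  unfolding ind_def by (simp add: sum.If_cases Int_def)

lemma Wn_Cr: "Wn y = {w\<in>Cr. adj w y}" unfolding Wn_def using Cr_iff by auto

lemma NCb_Cr: "NCb False x w = card {z\<in>Cr. adj x z \<and> adj z w}"
  unfolding NCb_def using Cr_iff by (intro arg_cong[where f = card]) auto

lemma T3_real: "real (T3 x y) = (\<Sum>w\<in>Cr. ind (adj w y) * (\<Sum>z\<in>Cr. ind (adj x z) * ind (adj z w)))"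
proof -
  have "real (T3 x y) = (\<Sum>w\<in>{w\<in>Cr. adj w y}. real (NCb False x w))"
    unfolding T3_def Wn_Cr by simp
  also have "\<dots> = (\<Sum>w\<in>Cr. if adj w y then real (NCb False x w) else 0)"
    using finCr by (simp add: sum.inter_filter)
  also have "\<dots> = (\<Sum>w\<in>Cr. ind (adj w y) * real (NCb False x w))"
    by (rule sum.cong) (auto simp: ind_def)
  also have "\<dots> = (\<Sum>w\<in>Cr. ind (adj w y) * (\<Sum>z\<in>Cr. ind (adj x z) * ind (adj z w)))"
  proof (rule sum.cong[OF refl])
    fix w
    have "real (NCb False x w) = (\<Sum>z\<in>Cr. ind (adj x z \<and> adj z w))"
      unfolding NCb_Cr by (rule card_real[OF finCr])
    also have "\<dots> = (\<Sum>z\<in>Cr. ind (adj x z) * ind (adj z w))"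
      by (rule sum.cong) (auto simp: ind_def)
    finally show "ind (adj w y) * real (NCb False x w) = ind (adj w y) * (\<Sum>z\<in>Cr. ind (adj x z) * ind (adj z w))"
      by simp
  qed
  finally show ?thesis .
qed

lemma M3:
  "Mop (Mop (Mop f)) x = (\<Sum>y\<in>Cr. real (T3 x y) * f y)"
proof -
  have "Mop (Mop (Mop f)) x = (\<Sum>z\<in>Cr. ind (adj x z) * (\<Sum>w\<in>Cr. ind (adj z w) * (\<Sum>y\<in>Cr. ind (adj w y) * f y)))"
    unfolding Mop_ind ..
  also have "\<dots> = (\<Sum>z\<in>Cr. \<Sum>w\<in>Cr. \<Sum>y\<in>Cr. ind (adj x z) * ind (adj z w) * ind (adj w y) * f y)"
    by (simp add: sum_distrib_left mult.assoc)
  also have "\<dots> = (\<Sum>w\<in>Cr. \<Sum>z\<in>Cr. \<Sum>y\<in>Cr. ind (adj x z) * ind (adj z w) * ind (adj w y) * f y)"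
    by (rule sum.swap)
  also have "\<dots> = (\<Sum>w\<in>Cr. \<Sum>y\<in>Cr. \<Sum>z\<in>Cr. ind (adj x z) * ind (adj z w) * ind (adj w y) * f y)"
    by (rule sum.cong[OF refl], rule sum.swap)
  also have "\<dots> = (\<Sum>y\<in>Cr. \<Sum>w\<in>Cr. \<Sum>z\<in>Cr. ind (adj x z) * ind (adj z w) * ind (adj w y) * f y)"
    by (rule sum.swap)
  also have "\<dots> = (\<Sum>y\<in>Cr. real (T3 x y) * f y)"
  proof (rule sum.cong[OF refl])
    fix y
    show "(\<Sum>w\<in>Cr. \<Sum>z\<in>Cr. ind (adj x z) * ind (adj z w) * ind (adj w y) * f y) = real (T3 x y) * f y"
      unfolding T3_real by (simp add: sum_distrib_left sum_distrib_right mult_ac)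
  qed
  finally show ?thesis .
qed

lemma T3_real_val:
  assumes x: "x \<in> Cr" and y: "y \<in> Cr"
  shows "real (T3 x y) = (if phi x = phi y then 0 else (real k - real \<mu>) * ind (adj x y) + real_of_int cc / 2)"
proof (cases "phi x = phi y")
  case True
  then show ?thesis using T3_same x y Cr_iff by auto
next
  case False
  have xy: "x \<in> V" "\<not> snd x" "y \<in> V" "\<not> snd y" using x y Cr_iff by auto
  have "2 * int (T3 x y) = 2 * (int k - int \<mu>) * (if adj x y then 1 else 0) + cc"
    using T3_val[OF xy False] unfolding cc_def by simp
  then have "real_of_int (2 * int (T3 x y)) = real_of_int (2 * (int k - int \<mu>) * (if adj x y then 1 else 0) + cc)"
    by simp
  then have "2 * real (T3 x y) = 2 * (real k - real \<mu>) * ind (adj x y) + real_of_int cc"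
    unfolding ind_def by (cases "adj x y") simp_all
  then have "real (T3 x y) = (real k - real \<mu>) * ind (adj x y) + real_of_int cc / 2"
    by (simp add: field_simps)
  then show ?thesis using False by simp
qed

definition "sig b f = (\<Sum>y\<in>{y\<in>Cr. phi y = b}. f y)"

lemma adj_phi: "x \<in> Cr \<Longrightarrow> y \<in> Cr \<Longrightarrow> adj x y \<Longrightarrow> phi x \<noteq> phi y"
  using phi_flip Cr_iff by blast

lemma M3_formula:
  assumes x: "x \<in> Cr"
  shows "Mop (Mop (Mop f)) x = (real k - real \<mu>) * Mop f x + real_of_int cc / 2 * sig (\<not> phi x) f"
proof -
  have "Mop (Mop (Mop f)) x = (\<Sum>y\<in>Cr. ((real k - real \<mu>) * (ind (adj x y) * f y)) + (if phi y = (\<not> phi x) then real_of_int cc / 2 * f y else 0))"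
    unfolding M3
  proof (rule sum.cong[OF refl])
    fix y assume y: "y \<in> Cr"
    show "real (T3 x y) * f y = (real k - real \<mu>) * (ind (adj x y) * f y) + (if phi y = (\<not> phi x) then real_of_int cc / 2 * f y else 0)"
    proof (cases "phi x = phi y")
      case True
      then have "\<not> adj x y" using adj_phi x y by blast
      then show ?thesis using True T3_real_val[OF x y] by (simp add: ind_def)
    next
      case False
      then have T: "real (T3 x y) = (real k - real \<mu>) * ind (adj x y) + real_of_int cc / 2"
        using T3_real_val[OF x y] by simp
      have "phi y = (\<not> phi x)" using False by auto
      then show ?thesis unfolding T by (simp add: algebra_simps)
    qed
  qed
  also have "\<dots> = (real k - real \<mu>) * (\<Sum>y\<in>Cr. ind (adj x y) * f y) + (\<Sum>y\<in>Cr. if phi y = (\<not> phi x) then real_of_int cc / 2 * f y else 0)"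
    by (simp add: sum.distrib sum_distrib_left)
  also have "(\<Sum>y\<in>Cr. if phi y = (\<not> phi x) then real_of_int cc / 2 * f y else 0) = real_of_int cc / 2 * sig (\<not> phi x) f"
    unfolding sig_def using finCr by (simp add: sum.inter_filter[symmetric] sum_distrib_left)
  finally show ?thesis unfolding Mop_ind .
qed

lemma sig_M:
  "sig b (Mop f) = real k1 * sig (\<not> b) f"
proof -
  have "sig b (Mop f) = (\<Sum>x\<in>{x\<in>Cr. phi x = b}. \<Sum>y\<in>Cr. ind (adj x y) * f y)"
    unfolding sig_def Mop_ind ..
  also have "\<dots> = (\<Sum>y\<in>Cr. \<Sum>x\<in>{x\<in>Cr. phi x = b}. ind (adj x y) * f y)"
    by (rule sum.swap)
  also have "\<dots> = (\<Sum>y\<in>Cr. (if phi y = (\<not> b) then real k1 * f y else 0))"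
  proof (rule sum.cong[OF refl])
    fix y assume y: "y \<in> Cr"
    have yV: "y \<in> V" "\<not> snd y" using y Cr_iff by auto
    have "(\<Sum>x\<in>{x\<in>Cr. phi x = b}. ind (adj x y) * f y) = real (card {x\<in>{x\<in>Cr. phi x = b}. adj x y}) * f y"
    proof -
      have "real (card {x\<in>{x\<in>Cr. phi x = b}. adj x y}) = (\<Sum>x\<in>{x\<in>Cr. phi x = b}. ind (adj x y))"
        by (rule card_real) (use finCr in simp)
      then show ?thesis by (simp add: sum_distrib_right)
    qed
    also have "{x\<in>{x\<in>Cr. phi x = b}. adj x y} = (if phi y = (\<not> b) then Wn y else {})"
    proof (cases "phi y = (\<not> b)")
      case True
      have "{x\<in>{x\<in>Cr. phi x = b}. adj x y} = {w\<in>Cr. adj w y}"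
      proof (rule equalityI; rule subsetI)
        fix x assume "x \<in> {w\<in>Cr. adj w y}"
        then have "x \<in> Cr" "adj x y" by auto
        then have "phi x \<noteq> phi y" using adj_phi[OF _ y] by blast
        then show "x \<in> {x\<in>{x\<in>Cr. phi x = b}. adj x y}" using True \<open>x \<in> Cr\<close> \<open>adj x y\<close> by auto
      qed auto
      then show ?thesis using True unfolding Wn_Cr by simp
    next
      case False
      have "{x\<in>{x\<in>Cr. phi x = b}. adj x y} = {}"
      proof (rule ccontr)
        assume "{x\<in>{x\<in>Cr. phi x = b}. adj x y} \<noteq> {}"
        then obtain x where "x \<in> Cr" "phi x = b" "adj x y" by auto
        then show False using adj_phi[OF _ y] False by blast
      qed
      then show ?thesis using False by simp
    qed
    finally show "(\<Sum>x\<in>{x\<in>Cr. phi x = b}. ind (adj x y) * f y) = (if phi y = (\<not> b) then real k1 * f y else 0)"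
      using Wn_card[OF yV] by simp
  qed
  also have "\<dots> = real k1 * sig (\<not> b) f"
    unfolding sig_def using finCr by (simp add: sum.inter_filter[symmetric] sum_distrib_left)
  finally show ?thesis .
qed

end


context cay begin

lemma Mop_diff: "Mop (\<lambda>y. g y - h y) x = Mop g x - Mop h x"
  unfolding Mop_def by (simp add: sum_subtractf)

lemma eig_iff: "graph_eigenvalue Cr adjC lam \<longleftrightarrow> (\<exists>f. (\<exists>x\<in>Cr. f x \<noteq> 0) \<and> (\<forall>x\<in>Cr. Mop f x = lam * f x))"
proof -
  have "{y\<in>Cr. adjC x y} = {y\<in>Cr. adj x y}" if "x \<in> Cr" for x
    using adjC_iff[OF that] by auto
  then show ?thesis unfolding graph_eigenvalue_def Mop_def by auto
qed

lemma e_Cr: "e \<in> Cr" by (rule Cr_el)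

lemma Cr_class: "{y\<in>Cr. phi y = b} = {y\<in>V. snd y = False \<and> phi y = b}"
  using Cr_iff by auto

lemma K_pos: "real k - real \<mu> > 0" using mu_lt by simp

lemma eig_sub:
  assumes x0: "x0 \<in> Cr" "f x0 \<noteq> 0" and ev: "\<And>x. x \<in> Cr \<Longrightarrow> Mop f x = lam * f x"
  shows "lam = real k1 \<or> lam = - real k1 \<or> lam = sqrt (real k - real \<mu>) \<or> lam = - sqrt (real k - real \<mu>) \<or> lam = 0"
proof (rule ccontr)
  assume nc: "\<not> ?thesis"
  have M2: "Mop (Mop f) x = lam * lam * f x" if "x \<in> Cr" for x
  proof -
    have "Mop (Mop f) x = Mop (\<lambda>y. lam * f y) x" by (rule Mop_cong) (use ev in auto)
    then show ?thesis using Mop_scale ev that by simp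
  qed
  have M3': "Mop (Mop (Mop f)) x = lam * lam * lam * f x" if "x \<in> Cr" for x
  proof -
    have "Mop (Mop (Mop f)) x = Mop (\<lambda>y. (lam * lam) * f y) x" by (rule Mop_cong) (use M2 in auto)
    then show ?thesis using Mop_scale ev that by simp
  qed
  have sg: "lam * sig b f = real k1 * sig (\<not> b) f" for b
  proof -
    have "sig b (Mop f) = sig b (\<lambda>y. lam * f y)"
      unfolding sig_def by (rule sum.cong) (use ev in auto)
    then show ?thesis using sig_M[of b f] unfolding sig_def by (simp add: sum_distrib_left)
  qed
  have l2: "lam * lam \<noteq> real k1 * real k1"
  proof
    assume "lam * lam = real k1 * real k1"
    then have "lam = real k1 \<or> lam = - real k1" by (metis minus_mult_minus square_eq_iff)
    then show False using nc by auto
  qed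
  have s0: "sig b f = 0" for b
  proof -
    have "lam * lam * sig b f = lam * (real k1 * sig (\<not> b) f)" using sg[of b] by (simp add: mult.assoc)
    also have "\<dots> = real k1 * (lam * sig (\<not> b) f)" by simp
    also have "\<dots> = real k1 * real k1 * sig b f" using sg[of "\<not> b"] by simp
    finally have "(lam * lam - real k1 * real k1) * sig b f = 0" by (simp add: algebra_simps)
    then show ?thesis using l2 by simp
  qed
  have "lam * lam * lam * f x0 = (real k - real \<mu>) * (lam * f x0)"
    using M3_formula[OF x0(1), of f] M3'[OF x0(1)] ev[OF x0(1)] s0 by simp
  then have "(lam * (lam * lam - (real k - real \<mu>))) * f x0 = 0" by (simp add: algebra_simps)
  then have "lam * (lam * lam - (real k - real \<mu>)) = 0" using x0(2) by simp
  then have "lam = 0 \<or> lam * lam = real k - real \<mu>" by simp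
  moreover have "lam * lam = real k - real \<mu> \<Longrightarrow> lam = sqrt (real k - real \<mu>) \<or> lam = - sqrt (real k - real \<mu>)"
  proof -
    assume "lam * lam = real k - real \<mu>"
    then have "sqrt (real k - real \<mu>) = \<bar>lam\<bar>" by (metis real_sqrt_abs power2_eq_square)
    then show ?thesis by (cases "lam \<ge> 0") auto
  qed
  ultimately show False using nc by blast
qed

lemma sum_if_eq_real:
  assumes "finite A" "x \<in> A"
  shows "(\<Sum>h\<in>A. if h = x then (a::real) else if P h then b else 0) = a + b * real (card {h\<in>A. h \<noteq> x \<and> P h})"
proof -
  have "(\<Sum>h\<in>A. if h = x then a else if P h then b else 0)
      = a + (\<Sum>h\<in>A - {x}. if h = x then a else if P h then b else 0)"
    using assms by (simp add: sum.remove)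
  also have "(\<Sum>h\<in>A - {x}. if h = x then a else if P h then b else 0) = (\<Sum>h\<in>A - {x}. if P h then b else 0)"
    by (rule sum.cong) auto
  also have "\<dots> = b * real (card {h\<in>A - {x}. P h})"
    using assms by (simp add: sum.If_cases Int_def)
  also have "{h\<in>A - {x}. P h} = {h\<in>A. h \<noteq> x \<and> P h}" by auto
  finally show ?thesis .
qed

lemma NC_e_other: "y \<in> Cr \<Longrightarrow> phi y \<noteq> phi e \<Longrightarrow> NCb False e y = 0"
proof -
  assume y: "y \<in> Cr" "phi y \<noteq> phi e"
  have "{z\<in>Cr. adj e z \<and> adj z y} = {}"
  proof (rule ccontr)
    assume "{z\<in>Cr. adj e z \<and> adj z y} \<noteq> {}"
    then obtain z where z: "z \<in> Cr" "adj e z" "adj z y" by auto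
    show False using adj_phi[OF e_Cr z(1) z(2)] adj_phi[OF z(1) y(1) z(3)] y(2) by auto
  qed
  then show ?thesis unfolding NCb_Cr by (metis card.empty)
qed

lemma sum_NC_e: "(\<Sum>y\<in>Cr. real (NCb False e y)) = real k1 * real k1"
proof -
  have "(\<Sum>h\<in>{h\<in>V. snd h = False}. NCb False e h) = cntb False e * k1"
    using sumNCb[OF e_V, of False False] by simp
  moreover have "{h\<in>V. snd h = False} = Cr" using Cr_iff by auto
  moreover have "cntb False e = k1" using cntb[OF e_V] by simp
  ultimately have "(\<Sum>h\<in>Cr. NCb False e h) = k1 * k1" by simp
  then show ?thesis by (metis of_nat_mult of_nat_sum)
qed

lemma const_NC:
  assumes h: "\<And>y. y \<in> Cr \<Longrightarrow> y \<noteq> e \<Longrightarrow> \<not> phi y \<Longrightarrow> real (NCb False e y) = v"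
  shows "real k1 * real k1 = real k1 + v * (real m - 1)"
proof -
  have "(\<Sum>y\<in>Cr. real (NCb False e y)) = (\<Sum>y\<in>Cr. if y = e then real k1 else if \<not> phi y then v else 0)"
  proof (rule sum.cong[OF refl])
    fix y assume y: "y \<in> Cr"
    show "real (NCb False e y) = (if y = e then real k1 else if \<not> phi y then v else 0)"
      using h[OF y] NC_e_other[OF y] NCb_self[OF e_V] phi_e by auto
  qed
  also have "\<dots> = real k1 + v * real (card {y\<in>Cr. y \<noteq> e \<and> \<not> phi y})"
    by (rule sum_if_eq_real[OF finCr e_Cr])
  also have "{y\<in>Cr. y \<noteq> e \<and> \<not> phi y} = {y\<in>V. snd y = False \<and> phi y = False} - {e}"
    using Cr_iff by auto
  also have "card \<dots> = m - 1" using card_phi[of False False] e_V phi_e finV by (simp add: card_Diff_singleton)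
  finally show ?thesis using sum_NC_e m_pos by (simp add: of_nat_diff)
qed

lemma y0_exists: "\<exists>y. y \<in> Cr \<and> y \<noteq> e \<and> \<not> phi y \<and> real (NCb False e y) \<noteq> real k1"
proof (rule ccontr)
  assume "\<not> ?thesis"
  then have "real k1 * real k1 = real k1 + real k1 * (real m - 1)"
    using const_NC[of "real k1"] by blast
  then have "real k1 * real k1 = real k1 * real m" by (simp add: algebra_simps)
  then have "real k1 = real m" using k1_pos by simp
  then show False using k1_ne_m by simp
qed

lemma y1_exists: "\<exists>y. y \<in> Cr \<and> y \<noteq> e \<and> \<not> phi y \<and> real (NCb False e y) \<noteq> real k1 - (real k - real \<mu>)"
proof (rule ccontr)
  assume "\<not> ?thesis"
  then have h: "real k1 * real k1 = real k1 + (real k1 - (real k - real \<mu>)) * (real m - 1)"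
    using const_NC[of "real k1 - (real k - real \<mu>)"] by blast
  have a: "real k1 * real k1 + real k2 * real k2 = real k + real \<mu> * (real m - 1)"
    using ident1 m_pos by (metis (no_types, lifting) One_nat_def Suc_leI of_nat_1 of_nat_add of_nat_diff of_nat_mult)
  have b: "2 * real k1 * real k2 = real \<mu> * real m"
    using ident2 by (metis of_nat_mult of_nat_numeral)
  have kk: "real k = real k1 + real k2" using k_split by simp
  have h': "real \<mu> + (real m * real k2 + real k1 * real k1) = real k1 + (real \<mu> * real m + real k2)"
    using h kk by (simp add: algebra_simps)
  have a': "real \<mu> + (real k1 * real k1 + real k2 * real k2) = real k1 + (real \<mu> * real m + real k2)"
    using a kk by (simp add: algebra_simps)
  have "real k2 * real k2 - real m * real k2 = 0" using h' a' by linarith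
  then have "real k2 * (real k2 - real m) = 0" by (simp add: algebra_simps)
  then have "real k2 = 0 \<or> real k2 = real m" by (simp only: mult_eq_0_iff) auto
  then show False
  proof
    assume "real k2 = 0"
    then have "real \<mu> = 0" using b m_pos by simp
    then have "real k1 * real k1 = real k1" using a \<open>real k2 = 0\<close> kk by simp
    then have "real k1 = 1" using k1_pos by simp
    then show False using kk \<open>real k2 = 0\<close> k_ge2 by simp
  next
    assume k2m: "real k2 = real m"
    then have mu2: "real \<mu> = 2 * real k1" using b m_pos by (simp add: algebra_simps)
    have lt: "real \<mu> < real k - 1" using mu_lt k_ge2 by (simp add: of_nat_diff)
    define d where "d = real m - real k1"
    have dd: "d * d = d" using a mu2 kk k2m unfolding d_def by (simp add: algebra_simps)
    have "real (k1 + 1) < real m" using lt mu2 kk k2m by simp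
    then have "k1 + 1 < m" by (simp only: of_nat_less_iff)
    then have "d \<ge> 2" unfolding d_def by simp
    then have "d * d \<ge> 2 * d" by (simp add: mult_right_mono)
    then show False using dd \<open>d \<ge> 2\<close> by simp
  qed
qed

end


lemma sum_delta_mult: "finite A \<Longrightarrow> (\<Sum>y\<in>A. g y * (if y = a then 1 else (0::real))) = (if a \<in> A then g a else 0)"
proof -
  assume "finite A"
  have "(\<lambda>y. g y * (if y = a then 1 else (0::real))) = (\<lambda>y. if y = a then g y else 0)" by auto
  then show ?thesis using sum.delta[OF \<open>finite A\<close>, of a g] by (simp only:)
qed

context cay begin

lemma deg_Cr: "x \<in> Cr \<Longrightarrow> card {y\<in>Cr. adj x y} = k1"
proof -
  assume x: "x \<in> Cr"
  then have xV: "x \<in> V" "\<not> snd x" using Cr_iff by auto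
  have "{y\<in>Cr. adj x y} = {w\<in>V. snd w = False \<and> adj x w}" using Cr_iff by auto
  then show ?thesis using cntb[OF xV(1), of False] xV unfolding cntb_def by simp
qed

lemma eig_k1: "graph_eigenvalue Cr adjC (real k1)"
  unfolding eig_iff
proof (intro exI[of _ "\<lambda>y. 1"] conjI ballI bexI[of _ e])
  fix x assume "x \<in> Cr"
  then show "Mop (\<lambda>y. 1) x = real k1 * 1" unfolding Mop_def using deg_Cr by simp
qed (simp_all add: e_Cr)

lemma eig_mk1: "graph_eigenvalue Cr adjC (- real k1)"
  unfolding eig_iff
proof (intro exI[of _ "\<lambda>y. if phi y then 1 else -1"] conjI ballI bexI[of _ e])
  fix x assume x: "x \<in> Cr"
  have "Mop (\<lambda>y. if phi y then 1 else -1) x = (\<Sum>y\<in>{y\<in>Cr. adj x y}. (if phi x then -1 else 1))"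
    unfolding Mop_def
  proof (rule sum.cong[OF refl])
    fix y assume "y \<in> {y\<in>Cr. adj x y}"
    then have "phi x \<noteq> phi y" using adj_phi[OF x] by blast
    then show "(if phi y then 1 else -1) = (if phi x then -1 else (1::real))" by auto
  qed
  then show "Mop (\<lambda>y. if phi y then 1 else -1) x = - real k1 * (if phi x then 1 else -1)"
    using deg_Cr[OF x] by simp
qed (simp_all add: e_Cr)

definition "f0 y0 = (\<lambda>y. (if y = e then 1 else 0) - (if y = y0 then (1::real) else 0))"

lemma f0_props:
  assumes y0: "y0 \<in> Cr" "y0 \<noteq> e" "\<not> phi y0"
  shows "sig b (f0 y0) = 0"
    and "\<And>x. x \<in> Cr \<Longrightarrow> Mop (Mop (Mop (f0 y0))) x = (real k - real \<mu>) * Mop (f0 y0) x"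
    and "Mop (f0 y0) e = 0"
    and "Mop (Mop (f0 y0)) e = real k1 - real (NCb False e y0)"
    and "f0 y0 e = 1"
proof -
  have fin: "finite {y\<in>Cr. phi y = b}" using finCr by simp
  have d1: "(\<Sum>y\<in>{y\<in>Cr. phi y = b}. if y = e then 1 else 0) = (if e \<in> {y\<in>Cr. phi y = b} then 1 else (0::real))" for b
    by (rule sum.delta[OF finite_subset[OF _ finCr]]) auto
  have d2: "(\<Sum>y\<in>{y\<in>Cr. phi y = b}. if y = y0 then 1 else 0) = (if y0 \<in> {y\<in>Cr. phi y = b} then 1 else (0::real))" for b
    by (rule sum.delta[OF finite_subset[OF _ finCr]]) auto
  show s0: "sig b (f0 y0) = 0" for b
    unfolding sig_def f0_def sum_subtractf d1 d2 using y0 e_Cr phi_e by simp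
  show "\<And>x. x \<in> Cr \<Longrightarrow> Mop (Mop (Mop (f0 y0))) x = (real k - real \<mu>) * Mop (f0 y0) x"
    using M3_formula s0 by simp
  have Mf: "Mop (f0 y0) z = ind (adj z e) - ind (adj z y0)" for z
    unfolding Mop_ind f0_def using finCr y0 e_Cr by (simp add: right_diff_distrib sum_subtractf sum_delta_mult)
  have "\<not> adj e y0" using adj_phi[OF e_Cr y0(1)] phi_e y0(3) by blast
  then show "Mop (f0 y0) e = 0"
    unfolding Mf using adj_irr[OF e_V] by (simp add: ind_def)
  have "Mop (Mop (f0 y0)) e = (\<Sum>z\<in>Cr. ind (adj e z) * ind (adj z e)) - (\<Sum>z\<in>Cr. ind (adj e z) * ind (adj z y0))"
    unfolding Mop_ind[of "Mop (f0 y0)"] Mf by (simp add: right_diff_distrib sum_subtractf)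
  also have "(\<Sum>z\<in>Cr. ind (adj e z) * ind (adj z e)) = real k1"
  proof -
    have "(\<Sum>z\<in>Cr. ind (adj e z) * ind (adj z e)) = (\<Sum>z\<in>Cr. ind (adj e z))"
      by (rule sum.cong) (use adj_sym e_V Cr_iff in \<open>auto simp: ind_def\<close>)
    also have "\<dots> = real (card {z\<in>Cr. adj e z})" by (rule card_real[symmetric, OF finCr])
    finally show ?thesis using deg_Cr[OF e_Cr] by simp
  qed
  also have "(\<Sum>z\<in>Cr. ind (adj e z) * ind (adj z y0)) = real (NCb False e y0)"
  proof -
    have "(\<Sum>z\<in>Cr. ind (adj e z) * ind (adj z y0)) = (\<Sum>z\<in>Cr. ind (adj e z \<and> adj z y0))"
      by (rule sum.cong) (auto simp: ind_def)
    also have "\<dots> = real (card {z\<in>Cr. adj e z \<and> adj z y0})" by (rule card_real[symmetric, OF finCr])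
    finally show ?thesis unfolding NCb_Cr .
  qed
  finally show "Mop (Mop (f0 y0)) e = real k1 - real (NCb False e y0)" .
  show "f0 y0 e = 1" unfolding f0_def using y0 by simp
qed

lemma eig_pm:
  assumes s2: "s * s = real k - real \<mu>"
  shows "graph_eigenvalue Cr adjC s"
proof -
  obtain y0 where y0: "y0 \<in> Cr" "y0 \<noteq> e" "\<not> phi y0" "real (NCb False e y0) \<noteq> real k1"
    using y0_exists by blast
  let ?f = "f0 y0"
  let ?g = "\<lambda>y. Mop (Mop ?f) y + s * Mop ?f y"
  show ?thesis unfolding eig_iff
  proof (intro exI[of _ ?g] conjI ballI bexI[of _ e])
    show "?g e \<noteq> 0" using f0_props[OF y0(1-3)] y0(4) by simp
    show "e \<in> Cr" by (rule e_Cr)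
    fix x assume x: "x \<in> Cr"
    have "Mop ?g x = Mop (Mop (Mop ?f)) x + s * Mop (Mop ?f) x"
      using Mop_add Mop_scale by simp
    also have "\<dots> = (s * s) * Mop ?f x + s * Mop (Mop ?f) x"
      using f0_props(2)[OF y0(1-3) x] s2 by simp
    finally show "Mop ?g x = s * ?g x" by (simp add: algebra_simps)
  qed
qed

lemma eig_0: "graph_eigenvalue Cr adjC 0"
proof -
  obtain y0 where y0: "y0 \<in> Cr" "y0 \<noteq> e" "\<not> phi y0" "real (NCb False e y0) \<noteq> real k1 - (real k - real \<mu>)"
    using y1_exists by blast
  let ?f = "f0 y0"
  let ?g = "\<lambda>y. Mop (Mop ?f) y - (real k - real \<mu>) * ?f y"
  show ?thesis unfolding eig_iff
  proof (intro exI[of _ ?g] conjI ballI bexI[of _ e])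
    show "?g e \<noteq> 0" using f0_props[OF y0(1-3)] y0(4) by simp
    show "e \<in> Cr" by (rule e_Cr)
    fix x assume x: "x \<in> Cr"
    have "Mop ?g x = Mop (Mop (Mop ?f)) x - (real k - real \<mu>) * Mop ?f x"
      using Mop_diff Mop_scale by simp
    then show "Mop ?g x = 0 * ?g x" using f0_props(2)[OF y0(1-3) x] by simp
  qed
qed

lemma eigen_set:
  "{lam. graph_eigenvalue Cr adjC lam}
       = {real k1, - real k1, sqrt (real k - real \<mu>), - sqrt (real k - real \<mu>), 0}"
proof (rule equalityI; rule subsetI)
  fix lam assume "lam \<in> {lam. graph_eigenvalue Cr adjC lam}"
  then obtain f x0 where "x0 \<in> Cr" "f x0 \<noteq> 0" "\<And>x. x \<in> Cr \<Longrightarrow> Mop f x = lam * f x"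
    unfolding eig_iff by auto
  then show "lam \<in> {real k1, - real k1, sqrt (real k - real \<mu>), - sqrt (real k - real \<mu>), 0}"
    using eig_sub by blast
next
  fix lam assume "lam \<in> {real k1, - real k1, sqrt (real k - real \<mu>), - sqrt (real k - real \<mu>), 0}"
  moreover have "sqrt (real k - real \<mu>) * sqrt (real k - real \<mu>) = real k - real \<mu>"
    using K_pos by simp
  ultimately show "lam \<in> {lam. graph_eigenvalue Cr adjC lam}"
    using eig_k1 eig_mk1 eig_0 eig_pm[of "sqrt (real k - real \<mu>)"] eig_pm[of "- sqrt (real k - real \<mu>)"]
    by auto
qed

end


theorem proposition5p2:
  fixes n m k \<mu> :: nat and S :: "(nat \<times> bool) set"
  defines "G \<equiv> dihedral_group n"
  defines "C \<equiv> dihedral_rotations n"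
  assumes "n = 2 * m" and "0 < m"
  assumes S_sub: "S \<subseteq> carrier G - {\<one>\<^bsub>G\<^esub>}"
    and S_inv: "\<forall>s\<in>S. inv\<^bsub>G\<^esub> s \<in> S"
  assumes drg: "distance_regular (carrier G) (cayley_adj G S) [k, k - 1, k - \<mu>] [1, \<mu>, k]"
    and "\<mu> < k - 1"
  assumes H_ne_C:
    "{g \<in> carrier G. even (graph_dist (carrier G) (cayley_adj G S) \<one>\<^bsub>G\<^esub> g)} \<noteq> C"
  shows "let k1 = card (S \<inter> C); k2 = k - k1 in
     (\<exists>\<alpha> \<beta> :: nat.
        spgd_incidence_graph C (cayley_adj G (S \<inter> C)) m k1 \<alpha> \<beta> \<and>
        real \<alpha> = real \<mu> * (2 * real k1 - real k2) / 2 \<and>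
        2 * int k1 - 1 + int \<beta> - int \<alpha> = (int k1 - int k2)^2 \<and>
        (int k1 - int k2)^2 = int k - int \<mu>) \<and>
     {lam. graph_eigenvalue C (cayley_adj G (S \<inter> C)) lam}
       = {real k1, - real k1, sqrt (real k - real \<mu>), - sqrt (real k - real \<mu>), 0}"
proof -
  interpret cay n m k \<mu> S
  proof (unfold_locales)
    show "0 < n" using assms(3,4) by simp
    show "n = 2 * m" by (rule assms(3))
    show "S \<subseteq> carrier (dihedral_group n) - {\<one>\<^bsub>dihedral_group n\<^esub>}" using S_sub unfolding G_def .
    show "\<forall>s\<in>S. inv\<^bsub>dihedral_group n\<^esub> s \<in> S" using S_inv unfolding G_def .
    show "distance_regular (carrier (dihedral_group n)) (cayley_adj (dihedral_group n) S) [k, k - 1, k - \<mu>] [1, \<mu>, k]"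
      using drg unfolding G_def .
    show "\<mu> < k - 1" by (rule assms(8))
    show "{g \<in> carrier (dihedral_group n). even (graph_dist (carrier (dihedral_group n)) (cayley_adj (dihedral_group n) S) \<one>\<^bsub>dihedral_group n\<^esub> g)} \<noteq> dihedral_rotations n"
      using H_ne_C unfolding G_def C_def .
  qed
  have D: "\<exists>\<alpha> \<beta> :: nat.
        spgd_incidence_graph Cr adjC m k1 \<alpha> \<beta> \<and>
        real \<alpha> = real \<mu> * (2 * real k1 - real k2) / 2 \<and>
        2 * int k1 - 1 + int \<beta> - int \<alpha> = (int k1 - int k2)^2 \<and>
        (int k1 - int k2)^2 = int k - int \<mu>" by (rule design)
  have E: "{lam. graph_eigenvalue Cr adjC lam}
       = {real k1, - real k1, sqrt (real k - real \<mu>), - sqrt (real k - real \<mu>), 0}" by (rule eigen_set)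
  show ?thesis unfolding Let_def G_def C_def using D E unfolding k1_def k2_def by blast
qed


end
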